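(* The following are equivalent for an integral domain $D$: (1) for every nonzero nonunit $x$ of $D$, $xD$ is a $\ast$-product of finitely many $\ast$-super homog ideals of type $1$; (2) $D$ is a $\ast$-GKD.
   Context: $\ast$ is a star operation on $D$ of finite character. A $\ast$-ideal is a nonzero fractional ideal $I$ with $I^\ast=I$; of finite type if $I=J^\ast$ for some nonzero finitely generated $J$. A maximal $\ast$-ideal is an integral $\ast$-ideal maximal among proper integral $\ast$-ideals. $I$ is $\ast$-invertible if $(II^{-1})^\ast=D$. A $\ast$-homog ideal is a proper integral $\ast$-ideal $I$ of finite type such that $(A+B)^\ast\neq D$ for every pair $A,B$ of proper integral $\ast$-ideals of finite type containing $I$; it lies in a unique maximal $\ast$-ideal $M(I)$. A $\ast$-homog ideal $I$ is of type $1$ if for every $x\in M(I)\setminus\{0\}$ there is $n\ge1$ with $x^nD_{M(I)}\cap D\subseteq I$. A $\ast$-super homog ideal is a $\ast$-homog ideal $I$ such that every $\ast$-ideal of finite type containing $I$ is $\ast$-invertible; it is of type $1$ if it is also a $\ast$-homog ideal of type $1$. $D$ is a $\ast$-IRKT if $D_P$ is a valuation domain for every maximal $\ast$-ideal $P$, $D=\bigcap_P D_P$ over the maximal $\ast$-ideals with the intersection locally finite, and no two distinct maximal $\ast$-ideals contain a common nonzero prime ideal. $D$ is a $\ast$-GKD if it is a $\ast$-IRKT all of whose maximal $\ast$-ideals have height $1$. *)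

theory Defs
  imports Main
begin

text \<open>Setting: an integral domain D is represented as a subring of a field of type 'a
whose elements are all quotients of elements of D (so 'a is the quotient field K of D).\<close>

definition is_domain_in :: "'a::field set \<Rightarrow> bool" where
  "is_domain_in D \<longleftrightarrow> 0 \<in> D \<and> 1 \<in> D \<and>
     (\<forall>a\<in>D. \<forall>b\<in>D. a + b \<in> D \<and> a - b \<in> D \<and> a * b \<in> D) \<and>
     (\<forall>x. \<exists>a\<in>D. \<exists>b\<in>D. b \<noteq> 0 \<and> x = a / b)"

definition submod :: "'a::field set \<Rightarrow> 'a set \<Rightarrow> bool" where
  "submod D I \<longleftrightarrow> 0 \<in> I \<and> (\<forall>a\<in>I. \<forall>b\<in>I. a + b \<in> I) \<and> (\<forall>d\<in>D. \<forall>a\<in>I. d * a \<in> I)"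

definition frac_ideal :: "'a::field set \<Rightarrow> 'a set \<Rightarrow> bool" where
  "frac_ideal D I \<longleftrightarrow> submod D I \<and> (\<exists>d\<in>D. d \<noteq> 0 \<and> (\<forall>x\<in>I. d * x \<in> D))"

definition nz_frac :: "'a::field set \<Rightarrow> 'a set \<Rightarrow> bool" where
  "nz_frac D I \<longleftrightarrow> frac_ideal D I \<and> I \<noteq> {0}"

definition principal_frac :: "'a::field set \<Rightarrow> 'a \<Rightarrow> 'a set" where
  "principal_frac D x = (\<lambda>d. x * d) ` D"

definition smul_set :: "'a::field \<Rightarrow> 'a set \<Rightarrow> 'a set" where
  "smul_set x A = (\<lambda>a. x * a) ` A"

definition gen :: "'a::field set \<Rightarrow> 'a set \<Rightarrow> 'a set" where
  "gen D F = {x. \<exists>c. (\<forall>f\<in>F. c f \<in> D) \<and> x = (\<Sum>f\<in>F. c f * f)}"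

definition fin_gen_nz :: "'a::field set \<Rightarrow> 'a set \<Rightarrow> bool" where
  "fin_gen_nz D J \<longleftrightarrow> (\<exists>F. finite F \<and> J = gen D F) \<and> J \<noteq> {0}"

definition ideal_add :: "'a::field set \<Rightarrow> 'a set \<Rightarrow> 'a set" where
  "ideal_add A B = {a + b | a b. a \<in> A \<and> b \<in> B}"

definition ideal_mult :: "'a::field set \<Rightarrow> 'a set \<Rightarrow> 'a set" where
  "ideal_mult A B = {x. \<exists>(n::nat) f g. (\<forall>i<n. f i \<in> A \<and> g i \<in> B) \<and> x = (\<Sum>i<n. f i * g i)}"

fun ideal_prod :: "'a::field set \<Rightarrow> 'a set list \<Rightarrow> 'a set" where
  "ideal_prod D [] = D"
| "ideal_prod D (I # Is) = ideal_mult I (ideal_prod D Is)"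

definition inv_ideal :: "'a::field set \<Rightarrow> 'a set \<Rightarrow> 'a set" where
  "inv_ideal D I = {x. \<forall>a\<in>I. x * a \<in> D}"

definition star_op :: "'a::field set \<Rightarrow> ('a set \<Rightarrow> 'a set) \<Rightarrow> bool" where
  "star_op D st \<longleftrightarrow>
     (\<forall>A. nz_frac D A \<longrightarrow> nz_frac D (st A)) \<and>
     (\<forall>x. x \<noteq> 0 \<longrightarrow> st (principal_frac D x) = principal_frac D x) \<and>
     (\<forall>x A. x \<noteq> 0 \<longrightarrow> nz_frac D A \<longrightarrow> st (smul_set x A) = smul_set x (st A)) \<and>
     (\<forall>A B. nz_frac D A \<longrightarrow> nz_frac D B \<longrightarrow> A \<subseteq> B \<longrightarrow> st A \<subseteq> st B) \<and>
     (\<forall>A. nz_frac D A \<longrightarrow> A \<subseteq> st A) \<and>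
     (\<forall>A. nz_frac D A \<longrightarrow> st (st A) = st A)"

definition finite_character :: "'a::field set \<Rightarrow> ('a set \<Rightarrow> 'a set) \<Rightarrow> bool" where
  "finite_character D st \<longleftrightarrow>
     (\<forall>A. nz_frac D A \<longrightarrow> st A = \<Union>{st J | J. fin_gen_nz D J \<and> J \<subseteq> A})"

definition star_ideal :: "'a::field set \<Rightarrow> ('a set \<Rightarrow> 'a set) \<Rightarrow> 'a set \<Rightarrow> bool" where
  "star_ideal D st I \<longleftrightarrow> nz_frac D I \<and> st I = I"

definition finite_type :: "'a::field set \<Rightarrow> ('a set \<Rightarrow> 'a set) \<Rightarrow> 'a set \<Rightarrow> bool" where
  "finite_type D st I \<longleftrightarrow> star_ideal D st I \<and> (\<exists>J. fin_gen_nz D J \<and> I = st J)"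

definition max_star :: "'a::field set \<Rightarrow> ('a set \<Rightarrow> 'a set) \<Rightarrow> 'a set \<Rightarrow> bool" where
  "max_star D st M \<longleftrightarrow> star_ideal D st M \<and> M \<subseteq> D \<and> M \<noteq> D \<and>
     (\<forall>J. star_ideal D st J \<and> J \<subseteq> D \<and> J \<noteq> D \<and> M \<subseteq> J \<longrightarrow> J = M)"

definition star_invertible :: "'a::field set \<Rightarrow> ('a set \<Rightarrow> 'a set) \<Rightarrow> 'a set \<Rightarrow> bool" where
  "star_invertible D st I \<longleftrightarrow> st (ideal_mult I (inv_ideal D I)) = D"

definition localization :: "'a::field set \<Rightarrow> 'a set \<Rightarrow> 'a set" where
  "localization D P = {a / s | a s. a \<in> D \<and> s \<in> D \<and> s \<notin> P}"

definition star_homog :: "'a::field set \<Rightarrow> ('a set \<Rightarrow> 'a set) \<Rightarrow> 'a set \<Rightarrow> bool" where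
  "star_homog D st I \<longleftrightarrow> I \<subseteq> D \<and> I \<noteq> D \<and> finite_type D st I \<and>
     (\<forall>A B. finite_type D st A \<and> A \<subseteq> D \<and> A \<noteq> D \<and> I \<subseteq> A \<and>
            finite_type D st B \<and> B \<subseteq> D \<and> B \<noteq> D \<and> I \<subseteq> B
            \<longrightarrow> st (ideal_add A B) \<noteq> D)"

text \<open>the unique maximal star-ideal containing I\<close>
definition M_of :: "'a::field set \<Rightarrow> ('a set \<Rightarrow> 'a set) \<Rightarrow> 'a set \<Rightarrow> 'a set" where
  "M_of D st I = (THE M. max_star D st M \<and> I \<subseteq> M)"

definition star_homog_type1 :: "'a::field set \<Rightarrow> ('a set \<Rightarrow> 'a set) \<Rightarrow> 'a set \<Rightarrow> bool" where
  "star_homog_type1 D st I \<longleftrightarrow> star_homog D st I \<and>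
     (\<forall>x \<in> M_of D st I - {0}. \<exists>n\<ge>1.
        principal_frac (localization D (M_of D st I)) (x ^ n) \<inter> D \<subseteq> I)"

definition star_super_homog :: "'a::field set \<Rightarrow> ('a set \<Rightarrow> 'a set) \<Rightarrow> 'a set \<Rightarrow> bool" where
  "star_super_homog D st I \<longleftrightarrow> star_homog D st I \<and>
     (\<forall>J. finite_type D st J \<and> I \<subseteq> J \<longrightarrow> star_invertible D st J)"

definition star_super_homog_type1 :: "'a::field set \<Rightarrow> ('a set \<Rightarrow> 'a set) \<Rightarrow> 'a set \<Rightarrow> bool" where
  "star_super_homog_type1 D st I \<longleftrightarrow> star_super_homog D st I \<and> star_homog_type1 D st I"

definition prime_ideal_in :: "'a::field set \<Rightarrow> 'a set \<Rightarrow> bool" where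
  "prime_ideal_in D P \<longleftrightarrow> submod D P \<and> P \<subseteq> D \<and> P \<noteq> D \<and>
     (\<forall>a\<in>D. \<forall>b\<in>D. a * b \<in> P \<longrightarrow> a \<in> P \<or> b \<in> P)"

definition height_one :: "'a::field set \<Rightarrow> 'a set \<Rightarrow> bool" where
  "height_one D P \<longleftrightarrow> prime_ideal_in D P \<and> P \<noteq> {0} \<and>
     (\<forall>Q. prime_ideal_in D Q \<and> Q \<noteq> {0} \<and> Q \<subseteq> P \<longrightarrow> Q = P)"

text \<open>valuation domain inside the field 'a (the quotient field of D_P is 'a)\<close>
definition valuation_domain_in :: "'a::field set \<Rightarrow> bool" where
  "valuation_domain_in V \<longleftrightarrow> is_domain_in V \<and> (\<forall>x. x \<noteq> 0 \<longrightarrow> x \<in> V \<or> inverse x \<in> V)"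

definition star_IRKT :: "'a::field set \<Rightarrow> ('a set \<Rightarrow> 'a set) \<Rightarrow> bool" where
  "star_IRKT D st \<longleftrightarrow>
     (\<forall>P. max_star D st P \<longrightarrow> valuation_domain_in (localization D P)) \<and>
     D = \<Inter>{localization D P | P. max_star D st P} \<and>
     (\<forall>x\<in>D. x \<noteq> 0 \<longrightarrow> finite {P. max_star D st P \<and> x \<in> P}) \<and>
     (\<forall>P Q. max_star D st P \<and> max_star D st Q \<and> P \<noteq> Q \<longrightarrow>
        \<not> (\<exists>R. prime_ideal_in D R \<and> R \<noteq> {0} \<and> R \<subseteq> P \<and> R \<subseteq> Q))"

definition star_GKD :: "'a::field set \<Rightarrow> ('a set \<Rightarrow> 'a set) \<Rightarrow> bool" where
  "star_GKD D st \<longleftrightarrow> star_IRKT D st \<and> (\<forall>P. max_star D st P \<longrightarrow> height_one D P)"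

end

theory Submission
  imports Defs
begin


lemma sum_concat_nat:
  fixes n m :: nat
  shows "(\<Sum>i<n+m. (if i < n then f i else g (i - n))) = (\<Sum>i<n. f i) + (\<Sum>i<m. (g i :: 'b::comm_monoid_add))"
proof (induction m)
  case 0 then show ?case by simp
next
  case (Suc m) then show ?case by (simp add: add.assoc)
qed

locale ctx =
  fixes D :: "'a::field set" and st :: "'a set \<Rightarrow> 'a set"
  assumes dom: "is_domain_in D" and sop: "star_op D st" and fc: "finite_character D st"
begin

lemma D0: "0 \<in> D" and D1: "1 \<in> D" using dom by (auto simp: is_domain_in_def)
lemma Dadd: "a \<in> D \<Longrightarrow> b \<in> D \<Longrightarrow> a + b \<in> D" using dom by (auto simp: is_domain_in_def)
lemma Ddiff: "a \<in> D \<Longrightarrow> b \<in> D \<Longrightarrow> a - b \<in> D" using dom by (auto simp: is_domain_in_def)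
lemma Dmult: "a \<in> D \<Longrightarrow> b \<in> D \<Longrightarrow> a * b \<in> D" using dom by (auto simp: is_domain_in_def)
lemma Dminus: "a \<in> D \<Longrightarrow> - a \<in> D" using Ddiff[OF D0, of a] by simp
lemma Dfrac: "\<exists>a\<in>D. \<exists>b\<in>D. b \<noteq> 0 \<and> x = a / b" using dom by (auto simp: is_domain_in_def)
lemma Dpow: "a \<in> D \<Longrightarrow> a ^ n \<in> D" by (induction n) (auto intro: D1 Dmult)

lemma Dsum: "(\<And>i. i \<in> S \<Longrightarrow> f i \<in> D) \<Longrightarrow> sum f S \<in> D"
proof (induction S rule: infinite_finite_induct)
  case (infinite A) then show ?case by (simp add: D0)
next
  case empty then show ?case by (simp add: D0)
next
  case (insert x F) then show ?case by (simp add: Dadd)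
qed

lemma Dprod: "(\<And>i. i \<in> S \<Longrightarrow> f i \<in> D) \<Longrightarrow> prod f S \<in> D"
proof (induction S rule: infinite_finite_induct)
  case (infinite A) then show ?case by (simp add: D1)
next
  case empty then show ?case by (simp add: D1)
next
  case (insert x F) then show ?case by (simp add: Dmult)
qed

lemma Dof_nat: "of_nat n \<in> D" by (induction n) (auto intro: D0 D1 Dadd)

lemma submod_sum: assumes "submod D I" "\<And>i. i \<in> S \<Longrightarrow> f i \<in> I" shows "sum f S \<in> I"
  using assms(2)
proof (induction S rule: infinite_finite_induct)
  case (infinite A) then show ?case using assms(1) by (simp add: submod_def)
next
  case empty then show ?case using assms(1) by (simp add: submod_def)
next
  case (insert x F) then show ?case using assms(1) by (simp add: submod_def)
qed

lemma submod_zero: "submod D I \<Longrightarrow> 0 \<in> I" by (simp add: submod_def)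
lemma submod_add: "submod D I \<Longrightarrow> a \<in> I \<Longrightarrow> b \<in> I \<Longrightarrow> a + b \<in> I" by (simp add: submod_def)
lemma submod_mult: "submod D I \<Longrightarrow> d \<in> D \<Longrightarrow> a \<in> I \<Longrightarrow> d * a \<in> I" by (simp add: submod_def)
lemma submod_minus: "submod D I \<Longrightarrow> a \<in> I \<Longrightarrow> - a \<in> I"
  using submod_mult[of I "-1" a] Dminus[OF D1] by simp
lemma submod_diff: "submod D I \<Longrightarrow> a \<in> I \<Longrightarrow> b \<in> I \<Longrightarrow> a - b \<in> I"
  using submod_add[of I a "-b"] submod_minus[of I b] by simp

lemma submod_D: "submod D D" by (auto simp: submod_def D0 Dadd Dmult)

lemma submod_one: "submod D I \<Longrightarrow> I \<subseteq> D \<Longrightarrow> 1 \<in> I \<Longrightarrow> I = D"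
  using submod_mult[of I _ 1] by force

lemma common_denom: "finite X \<Longrightarrow> \<exists>d\<in>D. d \<noteq> 0 \<and> (\<forall>x\<in>X. d * x \<in> D)"
proof (induction X rule: finite_induct)
  case empty then show ?case using D1 by (intro bexI[of _ 1]) auto
next
  case (insert x F)
  then obtain d where d: "d \<in> D" "d \<noteq> 0" "\<forall>x\<in>F. d * x \<in> D" by auto
  obtain a b where ab: "a \<in> D" "b \<in> D" "b \<noteq> 0" "x = a / b" using Dfrac by blast
  have "d * b \<in> D" "d * b \<noteq> 0" using d ab Dmult by auto
  moreover have "d * b * x \<in> D"
  proof -
    have e: "d * b * x = d * a" using ab by simp
    show ?thesis unfolding e using ab d Dmult by simp
  qed
  moreover have "\<forall>y\<in>F. d * b * y \<in> D" using d ab Dmult by (metis mult.commute mult.left_commute)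
  ultimately show ?case by (intro bexI[of _ "d*b"]) auto
qed

lemma nz_fracI: "submod D I \<Longrightarrow> d \<in> D \<Longrightarrow> d \<noteq> 0 \<Longrightarrow> (\<And>x. x \<in> I \<Longrightarrow> d * x \<in> D) \<Longrightarrow> a \<in> I \<Longrightarrow> a \<noteq> 0 \<Longrightarrow> nz_frac D I"
  unfolding nz_frac_def frac_ideal_def by blast

lemma nz_frac_int: "submod D I \<Longrightarrow> I \<subseteq> D \<Longrightarrow> I \<noteq> {0} \<Longrightarrow> nz_frac D I"
  unfolding nz_frac_def frac_ideal_def using D1 by (intro conjI bexI[of _ 1]) auto

lemma nz_frac_submod: "nz_frac D I \<Longrightarrow> submod D I" by (simp add: nz_frac_def frac_ideal_def)

lemma nz_frac_ex: "nz_frac D I \<Longrightarrow> \<exists>a\<in>I. a \<noteq> 0"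
  unfolding nz_frac_def frac_ideal_def submod_def by auto

lemma principal_smul: "principal_frac D x = smul_set x D" by (simp add: principal_frac_def smul_set_def)

lemma smul_nz: assumes "nz_frac D A" "x \<noteq> 0" shows "nz_frac D (smul_set x A)"
proof -
  have sm: "submod D A" using assms nz_frac_submod by auto
  have "submod D (smul_set x A)"
    unfolding submod_def smul_set_def
  proof (intro conjI ballI)
    show "0 \<in> (*) x ` A" using sm submod_zero by force
  next
    fix a b assume "a \<in> (*) x ` A" "b \<in> (*) x ` A"
    then obtain a' b' where "a' \<in> A" "b' \<in> A" "a = x * a'" "b = x * b'" by auto
    then show "a + b \<in> (*) x ` A" using submod_add[OF sm] by (auto simp: distrib_left[symmetric])
  next
    fix d a assume "d \<in> D" "a \<in> (*) x ` A"
    then obtain a' where "a' \<in> A" "a = x * a'" by auto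
    then show "d * a \<in> (*) x ` A" using submod_mult[OF sm \<open>d \<in> D\<close>] by (auto simp: mult.left_commute)
  qed
  moreover obtain d where d: "d \<in> D" "d \<noteq> 0" "\<forall>y\<in>A. d * y \<in> D"
    using assms unfolding nz_frac_def frac_ideal_def by auto
  obtain a b where ab: "a \<in> D" "b \<in> D" "b \<noteq> 0" "x = a / b" using Dfrac by blast
  have "\<forall>y\<in>smul_set x A. b * d * y \<in> D"
  proof
    fix y assume "y \<in> smul_set x A"
    then obtain y' where "y' \<in> A" "y = x * y'" by (auto simp: smul_set_def)
    then have e: "b * d * y = a * (d * y')" using ab by (simp add: field_simps)
    show "b * d * y \<in> D" unfolding e using d ab \<open>y' \<in> A\<close> Dmult by simp
  qed
  moreover have "b * d \<in> D" "b * d \<noteq> 0" using ab d Dmult by auto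
  moreover obtain a0 where "a0 \<in> A" "a0 \<noteq> 0" using nz_frac_ex[OF assms(1)] by auto
  then have "x * a0 \<in> smul_set x A" "x * a0 \<noteq> 0" using assms(2) by (auto simp: smul_set_def)
  ultimately show ?thesis unfolding nz_frac_def frac_ideal_def by blast
qed

lemma nz_frac_D: "nz_frac D D" using nz_frac_int[OF submod_D] D1 by (metis one_neq_zero singletonD subset_refl)

lemma principal_nz: "x \<noteq> 0 \<Longrightarrow> nz_frac D (principal_frac D x)"
  using smul_nz[OF nz_frac_D] by (simp add: principal_smul)

lemma smul_one: "smul_set 1 A = A" by (simp add: smul_set_def)
lemma principal_one: "principal_frac D 1 = D" by (simp add: principal_frac_def)

lemma st_nz: "nz_frac D A \<Longrightarrow> nz_frac D (st A)" using sop by (simp add: star_op_def)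
lemma st_princ: "x \<noteq> 0 \<Longrightarrow> st (principal_frac D x) = principal_frac D x" using sop by (simp add: star_op_def)
lemma st_smul: "x \<noteq> 0 \<Longrightarrow> nz_frac D A \<Longrightarrow> st (smul_set x A) = smul_set x (st A)" using sop by (simp add: star_op_def)
lemma st_mono: "nz_frac D A \<Longrightarrow> nz_frac D B \<Longrightarrow> A \<subseteq> B \<Longrightarrow> st A \<subseteq> st B" using sop by (simp add: star_op_def)
lemma st_ext: "nz_frac D A \<Longrightarrow> A \<subseteq> st A" using sop by (simp add: star_op_def)
lemma st_idem: "nz_frac D A \<Longrightarrow> st (st A) = st A" using sop by (simp add: star_op_def)
lemma st_D: "st D = D" using st_princ[of 1] principal_one by simp

lemma st_int: "nz_frac D A \<Longrightarrow> A \<subseteq> D \<Longrightarrow> st A \<subseteq> D"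
  using st_mono[OF _ nz_frac_D] st_D by auto

lemma st_below: "nz_frac D A \<Longrightarrow> star_ideal D st B \<Longrightarrow> A \<subseteq> B \<Longrightarrow> st A \<subseteq> B"
  using st_mono unfolding star_ideal_def by fastforce

lemma st_star_ideal: "nz_frac D A \<Longrightarrow> star_ideal D st (st A)"
  by (simp add: star_ideal_def st_nz st_idem)

lemma principal_star: "x \<noteq> 0 \<Longrightarrow> star_ideal D st (principal_frac D x)"
  by (simp add: star_ideal_def st_princ principal_nz)

lemma star_D: "star_ideal D st D" by (simp add: star_ideal_def st_D nz_frac_D)

lemma gen_submod: "submod D (gen D F)"
  unfolding submod_def gen_def
proof (intro conjI ballI)
  show "0 \<in> {x. \<exists>c. (\<forall>f\<in>F. c f \<in> D) \<and> x = (\<Sum>f\<in>F. c f * f)}"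
    by (rule CollectI, rule exI[of _ "\<lambda>_. 0"]) (simp add: D0)
next
  fix a b assume "a \<in> {x. \<exists>c. (\<forall>f\<in>F. c f \<in> D) \<and> x = (\<Sum>f\<in>F. c f * f)}"
    "b \<in> {x. \<exists>c. (\<forall>f\<in>F. c f \<in> D) \<and> x = (\<Sum>f\<in>F. c f * f)}"
  then obtain c1 c2 where c: "\<forall>f\<in>F. c1 f \<in> D" "a = (\<Sum>f\<in>F. c1 f * f)"
    "\<forall>f\<in>F. c2 f \<in> D" "b = (\<Sum>f\<in>F. c2 f * f)" by auto
  have "a + b = (\<Sum>f\<in>F. (c1 f + c2 f) * f)" using c by (simp add: sum.distrib distrib_right)
  then show "a + b \<in> {x. \<exists>c. (\<forall>f\<in>F. c f \<in> D) \<and> x = (\<Sum>f\<in>F. c f * f)}"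
    using c Dadd by (intro CollectI exI[of _ "\<lambda>f. c1 f + c2 f"]) auto
next
  fix d a assume d: "d \<in> D" and "a \<in> {x. \<exists>c. (\<forall>f\<in>F. c f \<in> D) \<and> x = (\<Sum>f\<in>F. c f * f)}"
  then obtain c1 where c: "\<forall>f\<in>F. c1 f \<in> D" "a = (\<Sum>f\<in>F. c1 f * f)" by auto
  have "d * a = (\<Sum>f\<in>F. (d * c1 f) * f)" using c by (simp add: sum_distrib_left mult.assoc)
  then show "d * a \<in> {x. \<exists>c. (\<forall>f\<in>F. c f \<in> D) \<and> x = (\<Sum>f\<in>F. c f * f)}"
    using c d Dmult by (intro CollectI exI[of _ "\<lambda>f. d * c1 f"]) auto
qed

lemma gen_contains: assumes "finite F" "f \<in> F" shows "f \<in> gen D F"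
proof -
  have "(\<Sum>g\<in>F. (if g = f then 1 else 0) * g) = (\<Sum>g\<in>F. if g = f then g else 0)"
    by (rule sum.cong) auto
  also have "\<dots> = f" using assms by (simp add: sum.delta')
  finally show ?thesis unfolding gen_def using D0 D1
    by (intro CollectI exI[of _ "\<lambda>g. if g = f then 1 else 0"]) auto
qed

lemma gen_least: assumes "submod D I" "F \<subseteq> I" shows "gen D F \<subseteq> I"
proof
  fix x assume "x \<in> gen D F"
  then obtain c where c: "\<forall>f\<in>F. c f \<in> D" "x = (\<Sum>f\<in>F. c f * f)" by (auto simp: gen_def)
  show "x \<in> I" unfolding c(2) using assms c(1) by (intro submod_sum) (auto intro: submod_mult)
qed

lemma gen_mono: "finite F' \<Longrightarrow> F \<subseteq> F' \<Longrightarrow> gen D F \<subseteq> gen D F'"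
  using gen_least[OF gen_submod] gen_contains by (metis subset_iff)

lemma gen_nz: assumes "finite F" "gen D F \<noteq> {0}" shows "nz_frac D (gen D F)"
proof -
  obtain d where d: "d \<in> D" "d \<noteq> 0" "\<forall>x\<in>F. d * x \<in> D" using common_denom[OF assms(1)] by auto
  have "\<forall>x\<in>gen D F. d * x \<in> D"
  proof
    fix x assume "x \<in> gen D F"
    then obtain c where c: "\<forall>f\<in>F. c f \<in> D" "x = (\<Sum>f\<in>F. c f * f)" by (auto simp: gen_def)
    have e: "d * x = (\<Sum>f\<in>F. c f * (d * f))" using c by (simp add: sum_distrib_left mult.left_commute)
    show "d * x \<in> D" unfolding e
    proof (rule Dsum)
      fix f assume "f \<in> F" then show "c f * (d * f) \<in> D" using c d Dmult[of "c f" "d*f"] by auto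
    qed
  qed
  then show ?thesis using d assms gen_submod unfolding nz_frac_def frac_ideal_def by auto
qed

lemma gen_ne0: "finite F \<Longrightarrow> f \<in> F \<Longrightarrow> f \<noteq> 0 \<Longrightarrow> gen D F \<noteq> {0}"
  using gen_contains by blast

lemma fin_gen_nz_nz: "fin_gen_nz D J \<Longrightarrow> nz_frac D J"
  unfolding fin_gen_nz_def using gen_nz by blast

lemma add_submod: assumes "submod D A" "submod D B" shows "submod D (ideal_add A B)"
  unfolding submod_def ideal_add_def
proof (intro conjI ballI)
  show "0 \<in> {a + b |a b. a \<in> A \<and> b \<in> B}" using assms submod_zero by force
next
  fix x y assume "x \<in> {a + b |a b. a \<in> A \<and> b \<in> B}" "y \<in> {a + b |a b. a \<in> A \<and> b \<in> B}"
  then obtain a b a' b' where "a \<in> A" "b \<in> B" "a' \<in> A" "b' \<in> B" "x = a + b" "y = a' + b'" by auto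
  moreover have "x + y = (a + a') + (b + b')" using calculation by (simp add: algebra_simps)
  ultimately show "x + y \<in> {a + b |a b. a \<in> A \<and> b \<in> B}" using assms submod_add by blast
next
  fix d x assume "d \<in> D" "x \<in> {a + b |a b. a \<in> A \<and> b \<in> B}"
  then obtain a b where "a \<in> A" "b \<in> B" "x = a + b" by auto
  moreover have "d * x = d * a + d * b" using calculation by (simp add: algebra_simps)
  ultimately show "d * x \<in> {a + b |a b. a \<in> A \<and> b \<in> B}" using assms submod_mult \<open>d \<in> D\<close> by blast
qed

lemma add_sup1: "submod D B \<Longrightarrow> A \<subseteq> ideal_add A B"
  unfolding ideal_add_def using submod_zero by force
lemma add_sup2: "submod D A \<Longrightarrow> B \<subseteq> ideal_add A B"
  unfolding ideal_add_def using submod_zero by force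
lemma add_least: "submod D C \<Longrightarrow> A \<subseteq> C \<Longrightarrow> B \<subseteq> C \<Longrightarrow> ideal_add A B \<subseteq> C"
  unfolding ideal_add_def using submod_add by blast

lemma add_nz: assumes "nz_frac D A" "nz_frac D B" shows "nz_frac D (ideal_add A B)"
proof -
  have sA: "submod D A" and sB: "submod D B" using assms nz_frac_submod by auto
  obtain d1 where d1: "d1 \<in> D" "d1 \<noteq> 0" "\<forall>x\<in>A. d1 * x \<in> D" using assms(1) by (auto simp: nz_frac_def frac_ideal_def)
  obtain d2 where d2: "d2 \<in> D" "d2 \<noteq> 0" "\<forall>x\<in>B. d2 * x \<in> D" using assms(2) by (auto simp: nz_frac_def frac_ideal_def)
  have "\<forall>x\<in>ideal_add A B. d1 * d2 * x \<in> D"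
  proof
    fix x assume "x \<in> ideal_add A B"
    then obtain a b where "a \<in> A" "b \<in> B" "x = a + b" by (auto simp: ideal_add_def)
    moreover have e: "d1 * d2 * x = d2 * (d1 * a) + d1 * (d2 * b)" using calculation by (simp add: algebra_simps)
    moreover have "d1 * a \<in> D" "d2 * b \<in> D" using d1 d2 calculation by auto
    ultimately show "d1 * d2 * x \<in> D" using d1 d2 Dadd Dmult by simp
  qed
  moreover obtain a where "a \<in> A" "a \<noteq> 0" using nz_frac_ex[OF assms(1)] by auto
  moreover have "d1 * d2 \<in> D" "d1 * d2 \<noteq> 0" using d1 d2 Dmult by auto
  ultimately show ?thesis using add_submod[OF sA sB] add_sup1[OF sB, of A]
    by (intro nz_fracI[of _ "d1 * d2" a]) auto
qed

lemma mult_in: "a \<in> A \<Longrightarrow> b \<in> B \<Longrightarrow> a * b \<in> ideal_mult A B"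
  unfolding ideal_mult_def by (intro CollectI exI[of _ "1::nat"] exI[of _ "\<lambda>_. a"] exI[of _ "\<lambda>_. b"]) auto

lemma mult_least: assumes "submod D C" "\<And>a b. a \<in> A \<Longrightarrow> b \<in> B \<Longrightarrow> a * b \<in> C"
  shows "ideal_mult A B \<subseteq> C"
proof
  fix x assume "x \<in> ideal_mult A B"
  then obtain n :: nat and f g where "\<forall>i<n. f i \<in> A \<and> g i \<in> B" "x = (\<Sum>i<n. f i * g i)" unfolding ideal_mult_def by blast
  then show "x \<in> C" using assms by (auto intro!: submod_sum)
qed

lemma mult_submod: assumes sA: "submod D A" shows "submod D (ideal_mult A B)"
  unfolding submod_def
proof (intro conjI ballI)
  show "0 \<in> ideal_mult A B" unfolding ideal_mult_def by (intro CollectI exI[of _ "0::nat"]) auto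
next
  fix x y assume "x \<in> ideal_mult A B" "y \<in> ideal_mult A B"
  then obtain n m :: nat and f g f' g' where h: "\<forall>i<n. f i \<in> A \<and> g i \<in> B" "x = (\<Sum>i<n. f i * g i)"
    "\<forall>i<m. f' i \<in> A \<and> g' i \<in> B" "y = (\<Sum>i<m. f' i * g' i)" unfolding ideal_mult_def by blast
  define F where "F = (\<lambda>i. if i < n then f i else f' (i - n))"
  define G where "G = (\<lambda>i. if i < n then g i else g' (i - n))"
  have "(\<Sum>i<n+m. F i * G i) = (\<Sum>i<n+m. (if i < n then f i * g i else f' (i - n) * g' (i - n)))"
    unfolding F_def G_def by (rule sum.cong) auto
  also have "\<dots> = x + y" using h sum_concat_nat[where n=n and m=m and f="\<lambda>i. f i * g i" and g="\<lambda>i. f' i * g' i"] by simp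
  finally have "x + y = (\<Sum>i<n+m. F i * G i)" by simp
  moreover have "\<forall>i<n+m. F i \<in> A \<and> G i \<in> B" using h unfolding F_def G_def by auto
  ultimately show "x + y \<in> ideal_mult A B" unfolding ideal_mult_def by blast
next
  fix d x assume d: "d \<in> D" "x \<in> ideal_mult A B"
  then obtain n :: nat and f g where h: "\<forall>i<n. f i \<in> A \<and> g i \<in> B" "x = (\<Sum>i<n. f i * g i)" unfolding ideal_mult_def by blast
  have "d * x = (\<Sum>i<n. (d * f i) * g i)" using h by (simp add: sum_distrib_left mult.assoc)
  moreover have "\<forall>i<n. d * f i \<in> A \<and> g i \<in> B" using h submod_mult[OF sA d(1)] by auto
  ultimately show "d * x \<in> ideal_mult A B" unfolding ideal_mult_def
    by (intro CollectI exI[of _ n] exI[of _ "\<lambda>i. d * f i"] exI[of _ g]) auto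
qed

lemma mult_nz: assumes "nz_frac D A" "nz_frac D B" shows "nz_frac D (ideal_mult A B)"
proof -
  have sA: "submod D A" and sB: "submod D B" using assms nz_frac_submod by auto
  obtain d1 where d1: "d1 \<in> D" "d1 \<noteq> 0" "\<forall>x\<in>A. d1 * x \<in> D" using assms(1) by (auto simp: nz_frac_def frac_ideal_def)
  obtain d2 where d2: "d2 \<in> D" "d2 \<noteq> 0" "\<forall>x\<in>B. d2 * x \<in> D" using assms(2) by (auto simp: nz_frac_def frac_ideal_def)
  have "\<forall>x\<in>ideal_mult A B. d1 * d2 * x \<in> D"
  proof
    fix x assume "x \<in> ideal_mult A B"
    then obtain n :: nat and f g where h: "\<forall>i<n. f i \<in> A \<and> g i \<in> B" "x = (\<Sum>i<n. f i * g i)" unfolding ideal_mult_def by blast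
    have e: "d1 * d2 * x = (\<Sum>i<n. (d1 * f i) * (d2 * g i))" using h by (simp add: sum_distrib_left algebra_simps)
    show "d1 * d2 * x \<in> D" unfolding e
    proof (rule Dsum)
      fix i assume "i \<in> {..<n}"
      then have "d1 * f i \<in> D" "d2 * g i \<in> D" using h d1 d2 by auto
      then show "d1 * f i * (d2 * g i) \<in> D" by (rule Dmult)
    qed
  qed
  moreover obtain a where a: "a \<in> A" "a \<noteq> 0" using nz_frac_ex[OF assms(1)] by auto
  obtain b where b: "b \<in> B" "b \<noteq> 0" using nz_frac_ex[OF assms(2)] by auto
  have "a * b \<in> ideal_mult A B" "a * b \<noteq> 0" using mult_in[OF a(1) b(1)] a b by auto
  moreover have "d1 * d2 \<in> D" "d1 * d2 \<noteq> 0" using d1 d2 Dmult by auto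
  ultimately show ?thesis using mult_submod[OF sA] \<open>a * b \<in> ideal_mult A B\<close> \<open>a * b \<noteq> 0\<close>
    by (intro nz_fracI[of _ "d1 * d2" "a * b"]) auto
qed

lemma mult_int: "submod D A \<Longrightarrow> A \<subseteq> D \<Longrightarrow> B \<subseteq> D \<Longrightarrow> ideal_mult A B \<subseteq> D"
  by (rule mult_least[OF submod_D]) (auto intro: Dmult)

lemma mult_subl: assumes "submod D A" "B \<subseteq> D" shows "ideal_mult A B \<subseteq> A"
proof (rule mult_least[OF assms(1)])
  fix a b assume "a \<in> A" "b \<in> B"
  then have "b * a \<in> A" using assms submod_mult by blast
  then show "a * b \<in> A" by (simp add: mult.commute)
qed

lemma mult_subr: assumes "submod D B" "A \<subseteq> D" shows "ideal_mult A B \<subseteq> B"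
  using assms by (intro mult_least) (auto intro: submod_mult)

lemma inv_submod: "submod D (inv_ideal D A)"
  unfolding submod_def inv_ideal_def
  by (auto simp: D0 distrib_right mult.assoc intro: Dadd Dmult)

lemma inv_nz: assumes "nz_frac D A" shows "nz_frac D (inv_ideal D A)"
proof -
  obtain d where d: "d \<in> D" "d \<noteq> 0" "\<forall>x\<in>A. d * x \<in> D" using assms by (auto simp: nz_frac_def frac_ideal_def)
  then have dI: "d \<in> inv_ideal D A" by (simp add: inv_ideal_def)
  obtain a0 where a0: "a0 \<in> A" "a0 \<noteq> 0" using nz_frac_ex[OF assms] by auto
  obtain p q where pq: "p \<in> D" "q \<in> D" "q \<noteq> 0" "a0 = p / q" using Dfrac by blast
  have p0: "p \<noteq> 0" using pq a0 by auto
  have "\<forall>h\<in>inv_ideal D A. p * h \<in> D"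
  proof
    fix h assume "h \<in> inv_ideal D A"
    then have "h * a0 \<in> D" using a0 by (simp add: inv_ideal_def)
    moreover have e: "p * h = (h * a0) * q" using pq by (simp add: field_simps)
    ultimately show "p * h \<in> D" using pq Dmult by metis
  qed
  then show ?thesis using inv_submod dI d pq p0 unfolding nz_frac_def frac_ideal_def by blast
qed

lemma mult_inv_int: "ideal_mult A (inv_ideal D A) \<subseteq> D"
  by (rule mult_least[OF submod_D]) (auto simp: inv_ideal_def mult.commute)

lemma inv_st: assumes "nz_frac D A" shows "inv_ideal D (st A) = inv_ideal D A"
proof
  show "inv_ideal D (st A) \<subseteq> inv_ideal D A" using st_ext[OF assms] by (auto simp: inv_ideal_def)
next
  show "inv_ideal D A \<subseteq> inv_ideal D (st A)"
  proof
    fix h assume h: "h \<in> inv_ideal D A"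
    show "h \<in> inv_ideal D (st A)"
    proof (cases "h = 0")
      case True then show ?thesis by (simp add: inv_ideal_def D0)
    next
      case False
      have sub: "smul_set h A \<subseteq> D" using h by (auto simp: inv_ideal_def smul_set_def mult.commute)
      have "st (smul_set h A) \<subseteq> D" using st_int[OF smul_nz[OF assms False] sub] .
      then have "smul_set h (st A) \<subseteq> D" using st_smul[OF False assms] by simp
      then show ?thesis by (auto simp: inv_ideal_def smul_set_def mult.commute)
    qed
  qed
qed

lemma max_props: assumes "max_star D st P"
  shows "star_ideal D st P" "P \<subseteq> D" "P \<noteq> D" "nz_frac D P" "submod D P" "1 \<notin> P" "0 \<in> P" "st P = P"
  using assms unfolding max_star_def star_ideal_def
  by (auto dest: nz_frac_submod submod_one intro: submod_zero nz_frac_submod)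

lemma max_maximal: "max_star D st P \<Longrightarrow> star_ideal D st J \<Longrightarrow> J \<subseteq> D \<Longrightarrow> J \<noteq> D \<Longrightarrow> P \<subseteq> J \<Longrightarrow> J = P"
  unfolding max_star_def by blast

lemma max_prime: assumes mP: "max_star D st P" shows "prime_ideal_in D P"
proof -
  note mp = max_props[OF mP]
  have "\<forall>a\<in>D. \<forall>b\<in>D. a * b \<in> P \<longrightarrow> a \<in> P \<or> b \<in> P"
  proof (intro ballI impI, rule ccontr)
    fix a b assume ab: "a \<in> D" "b \<in> D" "a * b \<in> P" "\<not> (a \<in> P \<or> b \<in> P)"
    then have a0: "a \<noteq> 0" and b0: "b \<noteq> 0" using mp by auto
    define S where "S = ideal_add P (principal_frac D a)"
    have pa: "nz_frac D (principal_frac D a)" using principal_nz[OF a0] .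
    have nzS: "nz_frac D S" unfolding S_def using add_nz[OF mp(4) pa] .
    have SD: "S \<subseteq> D" unfolding S_def using mp ab
      by (intro add_least[OF submod_D]) (auto simp: principal_frac_def intro: Dmult)
    have aS: "a \<in> S" unfolding S_def using add_sup2[OF mp(5), of "principal_frac D a"] D1
      by (force simp: principal_frac_def)
    have PS: "P \<subseteq> S" unfolding S_def using add_sup1[OF nz_frac_submod[OF pa]] .
    have stS: "star_ideal D st (st S)" using st_star_ideal[OF nzS] .
    have stSD: "st S \<subseteq> D" using st_int[OF nzS SD] .
    have "st S \<noteq> P" using st_ext[OF nzS] aS ab by auto
    then have "st S = D" using max_maximal[OF mP stS stSD] PS st_ext[OF nzS] by blast
    then have "1 \<in> st S" using D1 by simp
    then have "b * 1 \<in> smul_set b (st S)" by (auto simp: smul_set_def)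
    then have bst: "b \<in> st (smul_set b S)" using st_smul[OF b0 nzS] by simp
    have "smul_set b S \<subseteq> P"
    proof
      fix y assume "y \<in> smul_set b S"
      then obtain s where "s \<in> S" "y = b * s" by (auto simp: smul_set_def)
      then obtain p d where "p \<in> P" "d \<in> D" "y = b * (p + a * d)"
        unfolding S_def ideal_add_def principal_frac_def by auto
      moreover have "b * (p + a * d) = b * p + d * (a * b)" by (simp add: algebra_simps)
      ultimately show "y \<in> P" using mp ab submod_add submod_mult by metis
    qed
    then have "st (smul_set b S) \<subseteq> P" using st_below[OF smul_nz[OF nzS b0] mp(1)] by simp
    then show False using bst ab by auto
  qed
  then show ?thesis using mp unfolding prime_ideal_in_def by auto
qed

lemma prime_one: "prime_ideal_in D P \<Longrightarrow> 1 \<notin> P"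
  unfolding prime_ideal_in_def using submod_one by blast

lemma prime_pow: "prime_ideal_in D P \<Longrightarrow> z \<in> D \<Longrightarrow> z ^ n \<in> P \<Longrightarrow> z \<in> P"
proof (induction n)
  case 0 then show ?case using prime_one by auto
next
  case (Suc n) then show ?case unfolding prime_ideal_in_def using Dpow by auto
qed

lemma prime_pow_notin: "prime_ideal_in D P \<Longrightarrow> z \<in> D \<Longrightarrow> z \<notin> P \<Longrightarrow> z ^ n \<notin> P"
  using prime_pow by blast

lemma chain_finite: assumes "finite G" "C \<noteq> {}" "\<forall>X\<in>C. \<forall>Y\<in>C. X \<subseteq> Y \<or> Y \<subseteq> X" "G \<subseteq> \<Union>C"
  shows "\<exists>X\<in>C. G \<subseteq> X"
  using assms(1,4)
proof (induction G rule: finite_induct)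
  case empty then show ?case using assms(2) by auto
next
  case (insert x F)
  then obtain X where X: "X \<in> C" "F \<subseteq> X" by auto
  obtain Y where Y: "Y \<in> C" "x \<in> Y" using insert by auto
  show ?case using assms(3) X Y by (metis insert_subset subset_iff)
qed

lemma exists_max: assumes H: "star_ideal D st H" "H \<subseteq> D" "H \<noteq> D"
  shows "\<exists>P. max_star D st P \<and> H \<subseteq> P"
proof -
  define A where "A = {J. star_ideal D st J \<and> J \<subseteq> D \<and> J \<noteq> D \<and> H \<subseteq> J}"
  have HA: "H \<in> A" using H by (auto simp: A_def)
  have "\<forall>C\<in>chains A. \<exists>U\<in>A. \<forall>X\<in>C. X \<subseteq> U"
  proof
    fix C assume C: "C \<in> chains A"
    show "\<exists>U\<in>A. \<forall>X\<in>C. X \<subseteq> U"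
    proof (cases "C = {}")
      case True then show ?thesis using HA by auto
    next
      case False
      have CA: "C \<subseteq> A" and ch: "\<forall>X\<in>C. \<forall>Y\<in>C. X \<subseteq> Y \<or> Y \<subseteq> X"
        using C by (auto simp: chains_def chain_subset_def)
      define U where "U = \<Union>C"
      have memA: "\<And>X. X \<in> C \<Longrightarrow> star_ideal D st X \<and> X \<subseteq> D \<and> X \<noteq> D \<and> H \<subseteq> X"
        using CA by (auto simp: A_def)
      have smX: "\<And>X. X \<in> C \<Longrightarrow> submod D X" using memA by (auto simp: star_ideal_def nz_frac_submod)
      have one: "\<And>X. X \<in> C \<Longrightarrow> 1 \<notin> X" using memA smX submod_one by blast
      have smU: "submod D U"
        unfolding submod_def U_def
      proof (intro conjI ballI)
        show "0 \<in> \<Union>C" using False smX submod_zero by blast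
      next
        fix a b assume "a \<in> \<Union>C" "b \<in> \<Union>C"
        then obtain X Y where "X \<in> C" "Y \<in> C" "a \<in> X" "b \<in> Y" by auto
        then show "a + b \<in> \<Union>C" using ch smX submod_add by (metis UnionI subset_iff)
      next
        fix d a assume "d \<in> D" "a \<in> \<Union>C"
        then show "d * a \<in> \<Union>C" using smX submod_mult by blast
      qed
      have UD: "U \<subseteq> D" using memA by (auto simp: U_def)
      obtain X0 where X0: "X0 \<in> C" using False by auto
      have HU: "H \<subseteq> U" using memA X0 by (auto simp: U_def)
      have U0: "U \<noteq> {0}" using nz_frac_ex[of H] H HU by (auto simp: star_ideal_def)
      have nzU: "nz_frac D U" using nz_frac_int[OF smU UD U0] .
      have "st U \<subseteq> U"
      proof
        fix y assume "y \<in> st U"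
        then obtain J where J: "fin_gen_nz D J" "J \<subseteq> U" "y \<in> st J"
          using fc nzU unfolding finite_character_def by blast
        obtain G where G: "finite G" "J = gen D G" using J unfolding fin_gen_nz_def by auto
        have "G \<subseteq> U" using J G gen_contains by blast
        then obtain X where X: "X \<in> C" "G \<subseteq> X" using chain_finite[OF G(1) False ch] unfolding U_def by auto
        have "J \<subseteq> X" using G gen_least[OF smX[OF X(1)] X(2)] by simp
        then have "st J \<subseteq> X" using st_below[OF fin_gen_nz_nz[OF J(1)]] memA X by blast
        then show "y \<in> U" using J X by (auto simp: U_def)
      qed
      then have "star_ideal D st U" using st_ext[OF nzU] nzU by (auto simp: star_ideal_def)
      moreover have "U \<noteq> D" using one D1 by (auto simp: U_def)
      ultimately have "U \<in> A" using UD HU by (auto simp: A_def)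
      then show ?thesis by (auto simp: U_def)
    qed
  qed
  then obtain M where M: "M \<in> A" "\<forall>X\<in>A. M \<subseteq> X \<longrightarrow> X = M" using Zorn_Lemma2 by blast
  have "max_star D st M" using M unfolding max_star_def A_def by blast
  moreover have "H \<subseteq> M" using M(1) by (simp add: A_def)
  ultimately show ?thesis by blast
qed

end


context ctx begin

lemma loc_mem: "a \<in> D \<Longrightarrow> s \<in> D \<Longrightarrow> s \<notin> P \<Longrightarrow> a / s \<in> localization D P"
  unfolding localization_def by blast

lemma loc_elim: "v \<in> localization D P \<Longrightarrow> (\<And>a s. a \<in> D \<Longrightarrow> s \<in> D \<Longrightarrow> s \<notin> P \<Longrightarrow> v = a / s \<Longrightarrow> thesis) \<Longrightarrow> thesis"
  unfolding localization_def by blast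

lemma D_sub_loc: "1 \<notin> P \<Longrightarrow> D \<subseteq> localization D P"
proof
  fix a assume "1 \<notin> P" "a \<in> D"
  then have "a / 1 \<in> localization D P" using loc_mem D1 by blast
  then show "a \<in> localization D P" by simp
qed

lemma prime_sub: "prime_ideal_in D P \<Longrightarrow> P \<subseteq> D" by (simp add: prime_ideal_in_def)
lemma prime_submod: "prime_ideal_in D P \<Longrightarrow> submod D P" by (simp add: prime_ideal_in_def)
lemma prime_mult_notin: assumes "prime_ideal_in D P" "s \<in> D" "t \<in> D" "s \<notin> P" "t \<notin> P" shows "s * t \<notin> P"
  using assms unfolding prime_ideal_in_def by blast
lemma prime_zero: "prime_ideal_in D P \<Longrightarrow> 0 \<in> P" using prime_submod submod_zero by blast
lemma prime_ne0: "prime_ideal_in D P \<Longrightarrow> s \<notin> P \<Longrightarrow> s \<noteq> 0" using prime_zero by blast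

lemma loc_domain: assumes pP: "prime_ideal_in D P" shows "is_domain_in (localization D P)"
proof -
  let ?V = "localization D P"
  have one: "1 \<notin> P" using prime_one[OF pP] .
  have DV: "D \<subseteq> ?V" using D_sub_loc[OF one] .
  have cl: "\<forall>u\<in>?V. \<forall>v\<in>?V. u + v \<in> ?V \<and> u - v \<in> ?V \<and> u * v \<in> ?V"
  proof (intro ballI)
    fix u v assume u: "u \<in> ?V" and v: "v \<in> ?V"
    obtain a s where as: "a \<in> D" "s \<in> D" "s \<notin> P" "u = a / s" using loc_elim[OF u] by blast
    obtain b t where bt: "b \<in> D" "t \<in> D" "t \<notin> P" "v = b / t" using loc_elim[OF v] by blast
    have s0: "s \<noteq> 0" and t0: "t \<noteq> 0" using prime_ne0[OF pP] as bt by auto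
    have st: "s * t \<in> D" "s * t \<notin> P" using Dmult prime_mult_notin[OF pP] as bt by auto
    have e1: "u + v = (a * t + b * s) / (s * t)" using as bt s0 t0 by (simp add: field_simps)
    have e2: "u - v = (a * t - b * s) / (s * t)" using as bt s0 t0 by (simp add: field_simps)
    have e3: "u * v = (a * b) / (s * t)" using as bt s0 t0 by (simp add: field_simps)
    have "a * t + b * s \<in> D" "a * t - b * s \<in> D" "a * b \<in> D" using as bt Dmult Dadd Ddiff by auto
    then show "u + v \<in> ?V \<and> u - v \<in> ?V \<and> u * v \<in> ?V"
      unfolding e1 e2 e3 using st loc_mem by auto
  qed
  have "\<forall>x. \<exists>a\<in>?V. \<exists>b\<in>?V. b \<noteq> 0 \<and> x = a / b" using Dfrac DV by blast
  then show ?thesis unfolding is_domain_in_def using DV D0 D1 cl by blast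
qed

lemma prod_nz: "(\<forall>I\<in>set Is. nz_frac D I) \<Longrightarrow> nz_frac D (ideal_prod D Is)"
  by (induction Is) (auto simp: nz_frac_D intro: mult_nz)

lemma prod_int: "(\<forall>I\<in>set Is. I \<subseteq> D \<and> submod D I) \<Longrightarrow> ideal_prod D Is \<subseteq> D"
proof (induction Is)
  case Nil then show ?case by simp
next
  case (Cons I Is) then show ?case using mult_int[of I "ideal_prod D Is"] by auto
qed

lemma prod_submod: "(\<forall>I\<in>set Is. submod D I) \<Longrightarrow> submod D (ideal_prod D Is)"
  by (induction Is) (auto simp: submod_D intro: mult_submod)

lemma prod_prime: assumes pP: "prime_ideal_in D P"
  shows "(\<forall>I\<in>set Is. I \<subseteq> D \<and> submod D I) \<Longrightarrow> ideal_prod D Is \<subseteq> P \<Longrightarrow> \<exists>I\<in>set Is. I \<subseteq> P"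
proof (induction Is)
  case Nil then show ?case using prime_one[OF pP] D1 by auto
next
  case (Cons I Is)
  show ?case
  proof (cases "I \<subseteq> P")
    case True then show ?thesis by simp
  next
    case False
    then obtain i where i: "i \<in> I" "i \<notin> P" by auto
    have iD: "i \<in> D" using i Cons by auto
    have RD: "ideal_prod D Is \<subseteq> D" using prod_int Cons by auto
    have "ideal_prod D Is \<subseteq> P"
    proof
      fix r assume r: "r \<in> ideal_prod D Is"
      have "i * r \<in> ideal_mult I (ideal_prod D Is)" using mult_in[OF i(1) r] .
      then have "i * r \<in> P" using Cons by auto
      then show "r \<in> P" using pP iD RD r i unfolding prime_ideal_in_def by blast
    qed
    then show ?thesis using Cons by auto
  qed
qed

lemma mult_notin: assumes "submod D P" "\<not> ideal_mult A B \<subseteq> P" shows "\<exists>a\<in>A. \<exists>b\<in>B. a * b \<notin> P"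
  using mult_least[OF assms(1), of A B] assms(2) by blast

lemma homog_props: assumes "star_homog D st I"
  shows "I \<subseteq> D" "I \<noteq> D" "star_ideal D st I" "nz_frac D I" "submod D I"
    "\<exists>F. finite F \<and> gen D F \<noteq> {0} \<and> I = st (gen D F)"
  using assms unfolding star_homog_def finite_type_def star_ideal_def fin_gen_nz_def
  by (auto intro: nz_frac_submod)

lemma homog_unique:
  assumes hI: "star_homog D st I" and mP: "max_star D st P" and mQ: "max_star D st Q"
    and IP: "I \<subseteq> P" and IQ: "I \<subseteq> Q"
  shows "P = Q"
proof (rule ccontr)
  assume PQ: "P \<noteq> Q"
  note mp = max_props[OF mP] and mq = max_props[OF mQ]
  define S where "S = ideal_add P Q"
  have nzS: "nz_frac D S" unfolding S_def using add_nz mp mq by blast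
  have SD: "S \<subseteq> D" unfolding S_def using add_least[OF submod_D] mp mq by blast
  have PS: "P \<subseteq> S" and QS: "Q \<subseteq> S" unfolding S_def using add_sup1 add_sup2 mp mq by blast+
  have stSD: "st S \<subseteq> D" using st_int[OF nzS SD] .
  have "st S = D"
  proof (rule ccontr)
    assume "st S \<noteq> D"
    then have "st S = P" using max_maximal[OF mP st_star_ideal[OF nzS] stSD] PS st_ext[OF nzS] by blast
    then have "Q \<subseteq> P" using QS st_ext[OF nzS] by blast
    then have "P = Q" using max_maximal[OF mQ mp(1) mp(2) mp(3)] by simp
    then show False using PQ by simp
  qed
  then have "1 \<in> st S" using D1 by simp
  then obtain J where J: "fin_gen_nz D J" "J \<subseteq> S" "1 \<in> st J"
    using fc nzS unfolding finite_character_def by blast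
  obtain G where G: "finite G" "J = gen D G" using J unfolding fin_gen_nz_def by auto
  have GS: "G \<subseteq> S" using J G gen_contains by blast
  have "\<forall>g\<in>G. \<exists>pq. fst pq \<in> P \<and> snd pq \<in> Q \<and> g = fst pq + snd pq"
  proof
    fix g assume "g \<in> G"
    then have "g \<in> S" using GS by auto
    then obtain p q where "p \<in> P" "q \<in> Q" "g = p + q" unfolding S_def ideal_add_def by auto
    then show "\<exists>pq. fst pq \<in> P \<and> snd pq \<in> Q \<and> g = fst pq + snd pq" by (intro exI[of _ "(p,q)"]) auto
  qed
  then obtain pq where pq: "\<forall>g\<in>G. fst (pq g) \<in> P \<and> snd (pq g) \<in> Q \<and> g = fst (pq g) + snd (pq g)"
    by metis
  obtain F0 where F0: "finite F0" "gen D F0 \<noteq> {0}" "I = st (gen D F0)" using homog_props(6)[OF hI] by auto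
  have nz0: "nz_frac D (gen D F0)" using gen_nz F0 by auto
  define G1 where "G1 = F0 \<union> (\<lambda>g. fst (pq g)) ` G"
  define G2 where "G2 = F0 \<union> (\<lambda>g. snd (pq g)) ` G"
  have fin1: "finite G1" and fin2: "finite G2" using F0 G by (auto simp: G1_def G2_def)
  have F0I: "F0 \<subseteq> I" using gen_contains[OF F0(1)] st_ext[OF nz0] F0(3) by blast
  have sub1: "gen D F0 \<subseteq> gen D G1" and sub2: "gen D F0 \<subseteq> gen D G2"
    using gen_mono fin1 fin2 by (auto simp: G1_def G2_def)
  have nz1: "nz_frac D (gen D G1)" using gen_nz[OF fin1] sub1 F0(2) nz_frac_submod[OF nz0] submod_zero by blast
  have nz2: "nz_frac D (gen D G2)" using gen_nz[OF fin2] sub2 F0(2) nz_frac_submod[OF nz0] submod_zero by blast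
  have "G1 \<subseteq> P" using F0I IP pq by (auto simp: G1_def)
  then have g1P: "gen D G1 \<subseteq> P" by (rule gen_least[OF mp(5)])
  have "G2 \<subseteq> Q" using F0I IQ pq by (auto simp: G2_def)
  then have g2Q: "gen D G2 \<subseteq> Q" by (rule gen_least[OF mq(5)])
  define A where "A = st (gen D G1)"
  define B where "B = st (gen D G2)"
  have AP: "A \<subseteq> P" unfolding A_def using st_below[OF nz1 mp(1) g1P] .
  have BQ: "B \<subseteq> Q" unfolding B_def using st_below[OF nz2 mq(1) g2Q] .
  have ftA: "finite_type D st A" unfolding A_def finite_type_def fin_gen_nz_def
    using st_star_ideal[OF nz1] fin1 nz1 by (auto simp: nz_frac_def)
  have ftB: "finite_type D st B" unfolding B_def finite_type_def fin_gen_nz_def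
    using st_star_ideal[OF nz2] fin2 nz2 by (auto simp: nz_frac_def)
  have IA: "I \<subseteq> A" unfolding A_def F0(3) using st_mono[OF nz0 nz1 sub1] .
  have IB: "I \<subseteq> B" unfolding B_def F0(3) using st_mono[OF nz0 nz2 sub2] .
  have AD: "A \<subseteq> D" "A \<noteq> D" using AP mp by auto
  have BD: "B \<subseteq> D" "B \<noteq> D" using BQ mq by auto
  have ne: "st (ideal_add A B) \<noteq> D" using hI ftA ftB AD BD IA IB unfolding star_homog_def by blast
  have nzA: "nz_frac D A" and nzB: "nz_frac D B" using ftA ftB by (auto simp: finite_type_def star_ideal_def)
  have nzAB: "nz_frac D (ideal_add A B)" using add_nz[OF nzA nzB] .
  have ABD: "ideal_add A B \<subseteq> D" using add_least[OF submod_D] AD BD by blast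
  have "G \<subseteq> ideal_add A B"
  proof
    fix g assume g: "g \<in> G"
    have "fst (pq g) \<in> gen D G1" using gen_contains[OF fin1] g by (auto simp: G1_def)
    then have "fst (pq g) \<in> A" unfolding A_def using st_ext[OF nz1] by blast
    moreover have "snd (pq g) \<in> gen D G2" using gen_contains[OF fin2] g by (auto simp: G2_def)
    then have "snd (pq g) \<in> B" unfolding B_def using st_ext[OF nz2] by blast
    ultimately show "g \<in> ideal_add A B" using pq g unfolding ideal_add_def by blast
  qed
  then have "J \<subseteq> ideal_add A B" using G gen_least add_submod nzA nzB nz_frac_submod by metis
  then have "st J \<subseteq> st (ideal_add A B)" using st_mono[OF fin_gen_nz_nz[OF J(1)] nzAB] by blast
  then have "1 \<in> st (ideal_add A B)" using J by blast
  then have "st (ideal_add A B) = D"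
    using submod_one[OF nz_frac_submod[OF st_nz[OF nzAB]] st_int[OF nzAB ABD]] by simp
  then show False using ne by simp
qed

lemma M_of_eq: assumes "star_homog D st I" "max_star D st P" "I \<subseteq> P" shows "M_of D st I = P"
  unfolding M_of_def using assms homog_unique by (intro the_equality) blast+

lemma sh1_props: assumes "star_super_homog_type1 D st I"
  shows "star_homog D st I" "star_super_homog D st I" "I \<subseteq> D" "submod D I" "nz_frac D I"
  using assms homog_props unfolding star_super_homog_type1_def star_super_homog_def by auto

end


context ctx begin

lemma smul_gen_sub: assumes "submod D P" "\<forall>\<gamma>\<in>G. g * \<gamma> \<in> P" shows "smul_set g (gen D G) \<subseteq> P"
proof
  fix y assume "y \<in> smul_set g (gen D G)"
  then obtain z where z: "z \<in> gen D G" "y = g * z" by (auto simp: smul_set_def)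
  then obtain c where c: "\<forall>f\<in>G. c f \<in> D" "z = (\<Sum>f\<in>G. c f * f)" by (auto simp: gen_def)
  have e: "y = (\<Sum>f\<in>G. c f * (g * f))" using z c by (simp add: sum_distrib_left mult.left_commute)
  show "y \<in> P" unfolding e using assms c by (intro submod_sum) (auto intro: submod_mult)
qed

lemma principal_sub: "submod D R \<Longrightarrow> x \<in> R \<Longrightarrow> principal_frac D x \<subseteq> R"
  unfolding principal_frac_def using submod_mult by (fastforce simp: mult.commute)

lemma factor_mem: assumes sh: "\<forall>I\<in>set Is. star_super_homog_type1 D st I"
  and eq: "principal_frac D x = st (ideal_prod D Is)" and pR: "prime_ideal_in D R" and xR: "x \<in> R"
  shows "\<exists>I\<in>set Is. I \<subseteq> R"
proof -
  have props: "\<forall>I\<in>set Is. I \<subseteq> D \<and> submod D I" using sh sh1_props by blast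
  have "\<forall>I\<in>set Is. nz_frac D I" using sh sh1_props by blast
  then have nz: "nz_frac D (ideal_prod D Is)" by (rule prod_nz)
  have "ideal_prod D Is \<subseteq> principal_frac D x" using st_ext[OF nz] eq by simp
  also have "\<dots> \<subseteq> R" using principal_sub[OF prime_submod[OF pR] xR] .
  finally show ?thesis using prod_prime[OF pR props] by blast
qed

lemma inv_in_prime: assumes "prime_ideal_in D R" "y \<in> R" "y \<noteq> 0" shows "inverse y \<notin> D"
proof
  assume "inverse y \<in> D"
  then have "inverse y * y \<in> R" using assms prime_submod submod_mult by blast
  then show False using assms prime_one by simp
qed

lemma factor_in:
  assumes H1: "\<forall>x\<in>D. x \<noteq> 0 \<and> inverse x \<notin> D \<longrightarrow>
            (\<exists>Is. (\<forall>I\<in>set Is. star_super_homog_type1 D st I) \<and>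
                  principal_frac D x = st (ideal_prod D Is))"
  and pR: "prime_ideal_in D R" and y: "y \<in> R" "y \<noteq> 0"
  shows "\<exists>I. star_super_homog_type1 D st I \<and> I \<subseteq> R"
proof -
  have "y \<in> D" using y prime_sub[OF pR] by auto
  moreover have "inverse y \<notin> D" using inv_in_prime[OF pR y] .
  ultimately obtain Is where Is: "\<forall>I\<in>set Is. star_super_homog_type1 D st I"
    "principal_frac D y = st (ideal_prod D Is)" using H1 y by blast
  then show ?thesis using factor_mem[OF Is pR y(1)] by blast
qed

lemma valuation_from_super:
  assumes sI: "star_super_homog D st I" and mP: "max_star D st P" and IP: "I \<subseteq> P"
  shows "valuation_domain_in (localization D P)"
proof -
  note mp = max_props[OF mP]
  note pP = max_prime[OF mP]
  let ?V = "localization D P"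
  have hI: "star_homog D st I" using sI by (simp add: star_super_homog_def)
  obtain F0 where F0: "finite F0" "gen D F0 \<noteq> {0}" "I = st (gen D F0)" using homog_props(6)[OF hI] by auto
  have nz0: "nz_frac D (gen D F0)" using gen_nz F0 by auto
  have "\<forall>x. x \<noteq> 0 \<longrightarrow> x \<in> ?V \<or> inverse x \<in> ?V"
  proof (intro allI impI)
    fix x :: 'a assume x0: "x \<noteq> 0"
    define G where "G = F0 \<union> (\<lambda>f. x * f) ` F0"
    define J where "J = gen D G"
    have finG: "finite G" using F0 by (simp add: G_def)
    have subJ: "gen D F0 \<subseteq> J" unfolding J_def using gen_mono[OF finG] by (auto simp: G_def)
    have J0: "J \<noteq> {0}" using subJ F0(2) submod_zero[OF gen_submod] by blast
    have nzJ: "nz_frac D J" unfolding J_def using gen_nz[OF finG] J0 by (simp add: J_def)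
    have fgJ: "fin_gen_nz D J" unfolding fin_gen_nz_def J_def using finG J0 by (auto simp: J_def)
    have ftJ: "finite_type D st (st J)" unfolding finite_type_def using st_star_ideal[OF nzJ] fgJ by blast
    have IJ: "I \<subseteq> st J" unfolding F0(3) using st_mono[OF nz0 nzJ subJ] .
    have "star_invertible D st (st J)" using sI ftJ IJ unfolding star_super_homog_def by blast
    then have stX: "st (ideal_mult (st J) (inv_ideal D (st J))) = D" by (simp add: star_invertible_def)
    have nzX: "nz_frac D (ideal_mult (st J) (inv_ideal D (st J)))"
      using mult_nz[OF st_nz[OF nzJ] inv_nz[OF st_nz[OF nzJ]]] .
    have "\<not> ideal_mult (st J) (inv_ideal D (st J)) \<subseteq> P"
    proof
      assume "ideal_mult (st J) (inv_ideal D (st J)) \<subseteq> P"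
      then have "st (ideal_mult (st J) (inv_ideal D (st J))) \<subseteq> P" using st_below[OF nzX mp(1)] by blast
      then show False using stX D1 mp(6) by auto
    qed
    then obtain f g where fg: "f \<in> st J" "g \<in> inv_ideal D (st J)" "f * g \<notin> P"
      using mult_notin[OF mp(5)] by blast
    have g0: "g \<noteq> 0" using fg mp(7) by auto
    have gJ: "\<forall>\<gamma>\<in>st J. g * \<gamma> \<in> D" using fg(2) by (simp add: inv_ideal_def)
    have GJ: "G \<subseteq> st J" using gen_contains[OF finG] st_ext[OF nzJ] by (auto simp: J_def)
    have "\<exists>\<gamma>0\<in>G. g * \<gamma>0 \<notin> P"
    proof (rule ccontr)
      assume "\<not> (\<exists>\<gamma>0\<in>G. g * \<gamma>0 \<notin> P)"
      then have "smul_set g J \<subseteq> P" unfolding J_def using smul_gen_sub[OF mp(5)] by blast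
      then have "st (smul_set g J) \<subseteq> P" using st_below[OF smul_nz[OF nzJ g0] mp(1)] by blast
      then have "smul_set g (st J) \<subseteq> P" using st_smul[OF g0 nzJ] by simp
      then have "g * f \<in> P" using fg(1) by (auto simp: smul_set_def)
      then show False using fg(3) by (simp add: mult.commute)
    qed
    then obtain \<gamma>0 where g0G: "\<gamma>0 \<in> G" "g * \<gamma>0 \<notin> P" by blast
    have gg0D: "g * \<gamma>0 \<in> D" using gJ GJ g0G by auto
    have ga0: "\<gamma>0 \<noteq> 0" using g0G mp(7) by auto
    have ratio: "\<And>\<gamma>. \<gamma> \<in> G \<Longrightarrow> \<gamma> / \<gamma>0 \<in> ?V"
    proof -
      fix \<gamma> assume "\<gamma> \<in> G"
      then have "g * \<gamma> \<in> D" using gJ GJ by auto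
      then have "(g * \<gamma>) / (g * \<gamma>0) \<in> ?V" using loc_mem gg0D g0G by blast
      moreover have "(g * \<gamma>) / (g * \<gamma>0) = \<gamma> / \<gamma>0" using g0 by simp
      ultimately show "\<gamma> / \<gamma>0 \<in> ?V" by simp
    qed
    show "x \<in> ?V \<or> inverse x \<in> ?V"
    proof (cases "\<gamma>0 \<in> F0")
      case True
      then have "x * \<gamma>0 \<in> G" unfolding G_def by (intro UnI2 image_eqI[of _ _ \<gamma>0]) auto
      then have "(x * \<gamma>0) / \<gamma>0 \<in> ?V" by (rule ratio)
      then show ?thesis using ga0 by simp
    next
      case False
      then obtain f where f: "f \<in> F0" "\<gamma>0 = x * f" using g0G by (auto simp: G_def)
      then have "f \<in> G" by (simp add: G_def)
      then have "f / \<gamma>0 \<in> ?V" by (rule ratio)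
      moreover have "f \<noteq> 0" using f ga0 by auto
      ultimately show ?thesis using f by (simp add: field_simps)
    qed
  qed
  then show ?thesis unfolding valuation_domain_in_def using loc_domain[OF pP] by blast
qed

lemma D_inter: "D = \<Inter>{localization D P | P. max_star D st P}"
proof
  show "D \<subseteq> \<Inter>{localization D P | P. max_star D st P}"
    using D_sub_loc max_props(6) by blast
next
  show "\<Inter>{localization D P | P. max_star D st P} \<subseteq> D"
  proof
    fix y assume yI: "y \<in> \<Inter>{localization D P | P. max_star D st P}"
    show "y \<in> D"
    proof (rule ccontr)
      assume yD: "y \<notin> D"
      then have y0: "y \<noteq> 0" using D0 by auto
      define H where "H = {d \<in> D. d * y \<in> D}"
      have smH: "submod D H" unfolding submod_def H_def
        using D0 by (auto simp: distrib_right mult.assoc intro: Dadd Dmult)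
      have HD: "H \<subseteq> D" by (auto simp: H_def)
      obtain a b where ab: "a \<in> D" "b \<in> D" "b \<noteq> 0" "y = a / b" using Dfrac by blast
      have "b * y = a" using ab by simp
      then have bH: "b \<in> H" using ab by (simp add: H_def)
      have nzH: "nz_frac D H" using nz_frac_int[OF smH HD] bH ab(3) by auto
      have "smul_set y H \<subseteq> D" by (auto simp: smul_set_def H_def mult.commute)
      then have "st (smul_set y H) \<subseteq> D" using st_int[OF smul_nz[OF nzH y0]] by blast
      then have sy: "smul_set y (st H) \<subseteq> D" using st_smul[OF y0 nzH] by simp
      have "st H \<subseteq> H"
      proof
        fix h assume h: "h \<in> st H"
        then have "h \<in> D" using st_int[OF nzH HD] by auto
        moreover have "y * h \<in> D" using sy h by (auto simp: smul_set_def)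
        ultimately show "h \<in> H" by (simp add: H_def mult.commute)
      qed
      then have sH: "star_ideal D st H" using st_ext[OF nzH] nzH by (auto simp: star_ideal_def)
      have "1 \<notin> H" using yD by (simp add: H_def)
      then have "H \<noteq> D" using D1 by auto
      then obtain P where P: "max_star D st P" "H \<subseteq> P" using exists_max[OF sH HD] by blast
      then have "y \<in> localization D P" using yI by blast
      then obtain c s where cs: "c \<in> D" "s \<in> D" "s \<notin> P" "y = c / s" by (rule loc_elim)
      have "s \<noteq> 0" using cs max_props(7)[OF P(1)] by auto
      then have "s * y = c" using cs by simp
      then have "s \<in> H" using cs by (simp add: H_def)
      then show False using P cs by auto
    qed
  qed
qed

lemma one_to_two:
  assumes H1: "\<forall>x\<in>D. x \<noteq> 0 \<and> inverse x \<notin> D \<longrightarrow>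
            (\<exists>Is. (\<forall>I\<in>set Is. star_super_homog_type1 D st I) \<and>
                  principal_frac D x = st (ideal_prod D Is))"
  shows "star_GKD D st"
proof -
  have exI1: "\<exists>I. star_super_homog_type1 D st I \<and> I \<subseteq> P" if mP: "max_star D st P" for P
  proof -
    obtain y where "y \<in> P" "y \<noteq> 0" using nz_frac_ex[OF max_props(4)[OF mP]] by auto
    then show ?thesis using factor_in[OF H1 max_prime[OF mP]] by blast
  qed
  have val: "\<forall>P. max_star D st P \<longrightarrow> valuation_domain_in (localization D P)"
  proof (intro allI impI)
    fix P assume mP: "max_star D st P"
    obtain I where "star_super_homog_type1 D st I" "I \<subseteq> P" using exI1[OF mP] by blast
    then show "valuation_domain_in (localization D P)"
      using valuation_from_super[OF _ mP] sh1_props by blast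
  qed
  have fin: "\<forall>x\<in>D. x \<noteq> 0 \<longrightarrow> finite {P. max_star D st P \<and> x \<in> P}"
  proof (intro ballI impI)
    fix x assume x: "x \<in> D" "x \<noteq> 0"
    show "finite {P. max_star D st P \<and> x \<in> P}"
    proof (cases "inverse x \<in> D")
      case True
      then have e: "{P. max_star D st P \<and> x \<in> P} = {}"
        using inv_in_prime[OF max_prime] x by blast
      show ?thesis unfolding e by simp
    next
      case False
      then obtain Is where Is: "\<forall>I\<in>set Is. star_super_homog_type1 D st I"
        "principal_frac D x = st (ideal_prod D Is)" using H1 x by blast
      have "{P. max_star D st P \<and> x \<in> P} \<subseteq> M_of D st ` set Is"
      proof
        fix P assume "P \<in> {P. max_star D st P \<and> x \<in> P}"
        then have P: "max_star D st P" "x \<in> P" by auto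
        obtain I where I: "I \<in> set Is" "I \<subseteq> P" using factor_mem[OF Is max_prime[OF P(1)] P(2)] by blast
        have "M_of D st I = P" using M_of_eq[OF _ P(1) I(2)] Is I sh1_props by blast
        then show "P \<in> M_of D st ` set Is" using I by blast
      qed
      then show ?thesis by (rule finite_subset) simp
    qed
  qed
  have indep: "\<forall>P Q. max_star D st P \<and> max_star D st Q \<and> P \<noteq> Q \<longrightarrow>
        \<not> (\<exists>R. prime_ideal_in D R \<and> R \<noteq> {0} \<and> R \<subseteq> P \<and> R \<subseteq> Q)"
  proof (intro allI impI notI)
    fix P Q assume PQ: "max_star D st P \<and> max_star D st Q \<and> P \<noteq> Q"
      and "\<exists>R. prime_ideal_in D R \<and> R \<noteq> {0} \<and> R \<subseteq> P \<and> R \<subseteq> Q"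
    then obtain R where R: "prime_ideal_in D R" "R \<noteq> {0}" "R \<subseteq> P" "R \<subseteq> Q" by blast
    obtain y where "y \<in> R" "y \<noteq> 0" using R(2) prime_zero[OF R(1)] by blast
    then obtain I where I: "star_super_homog_type1 D st I" "I \<subseteq> R" using factor_in[OF H1 R(1)] by blast
    have "M_of D st I = P" using M_of_eq[OF sh1_props(1)[OF I(1)]] PQ I R by blast
    moreover have "M_of D st I = Q" using M_of_eq[OF sh1_props(1)[OF I(1)]] PQ I R by blast
    ultimately show False using PQ by simp
  qed
  have ht: "\<forall>P. max_star D st P \<longrightarrow> height_one D P"
  proof (intro allI impI)
    fix P assume mP: "max_star D st P"
    have pP: "prime_ideal_in D P" using max_prime[OF mP] .
    have P0: "P \<noteq> {0}" using max_props(4)[OF mP] by (simp add: nz_frac_def)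
    have "\<forall>Q. prime_ideal_in D Q \<and> Q \<noteq> {0} \<and> Q \<subseteq> P \<longrightarrow> Q = P"
    proof (intro allI impI)
      fix Q assume Q: "prime_ideal_in D Q \<and> Q \<noteq> {0} \<and> Q \<subseteq> P"
      obtain y where "y \<in> Q" "y \<noteq> 0" using Q prime_zero by blast
      then obtain I where I: "star_super_homog_type1 D st I" "I \<subseteq> Q" using factor_in[OF H1] Q by blast
      have MI: "M_of D st I = P" using M_of_eq[OF sh1_props(1)[OF I(1)] mP] I Q by blast
      have "P \<subseteq> Q"
      proof
        fix z assume zP: "z \<in> P"
        show "z \<in> Q"
        proof (cases "z = 0")
          case True then show ?thesis using prime_zero Q by blast
        next
          case False
          then have "z \<in> M_of D st I - {0}" using MI zP by simp
          then obtain n where n: "n \<ge> 1" "principal_frac (localization D (M_of D st I)) (z ^ n) \<inter> D \<subseteq> I"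
            using I(1) unfolding star_super_homog_type1_def star_homog_type1_def by blast
          have zD: "z \<in> D" using zP max_props(2)[OF mP] by auto
          have "1 \<in> localization D P" using D_sub_loc[OF max_props(6)[OF mP]] D1 by auto
          then have "z ^ n * 1 \<in> principal_frac (localization D P) (z ^ n)" by (auto simp: principal_frac_def)
          then have "z ^ n \<in> I" using n MI Dpow[OF zD] by auto
          then have "z ^ n \<in> Q" using I by auto
          then show "z \<in> Q" using prime_pow Q zD by blast
        qed
      qed
      then show "Q = P" using Q by auto
    qed
    then show "height_one D P" unfolding height_one_def using pP P0 by blast
  qed
  show ?thesis unfolding star_GKD_def star_IRKT_def using val D_inter fin indep ht by blast
qed

end


definition lcl :: "'a::field set \<Rightarrow> 'a set \<Rightarrow> 'a set \<Rightarrow> 'a set" where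
  "lcl D A M = {a / s | a s. a \<in> A \<and> s \<in> D \<and> s \<notin> M}"

context ctx begin

lemma lcl_mem: "a \<in> A \<Longrightarrow> s \<in> D \<Longrightarrow> s \<notin> M \<Longrightarrow> a / s \<in> lcl D A M"
  unfolding lcl_def by blast
lemma lcl_elim: "v \<in> lcl D A M \<Longrightarrow> (\<And>a s. a \<in> A \<Longrightarrow> s \<in> D \<Longrightarrow> s \<notin> M \<Longrightarrow> v = a / s \<Longrightarrow> thesis) \<Longrightarrow> thesis"
  unfolding lcl_def by blast
lemma lcl_mono: "A \<subseteq> B \<Longrightarrow> lcl D A M \<subseteq> lcl D B M"
  unfolding lcl_def by blast
lemma lcl_self: assumes "1 \<notin> M" shows "A \<subseteq> lcl D A M"
proof
  fix a assume "a \<in> A" then have "a / 1 \<in> lcl D A M" using lcl_mem D1 assms by blast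
  then show "a \<in> lcl D A M" by simp
qed
lemma lcl_D: "lcl D D M = localization D M" by (simp add: lcl_def localization_def)

lemma V_closed: assumes "prime_ideal_in D P" "u \<in> localization D P" "v \<in> localization D P"
  shows "u * v \<in> localization D P" "u + v \<in> localization D P"
  using loc_domain[OF assms(1)] assms(2,3) unfolding is_domain_in_def by auto

lemma V_one: "prime_ideal_in D P \<Longrightarrow> 1 \<in> localization D P"
  using loc_domain unfolding is_domain_in_def by auto
lemma V_zero: "prime_ideal_in D P \<Longrightarrow> 0 \<in> localization D P"
  using loc_domain unfolding is_domain_in_def by auto
lemma V_D: "prime_ideal_in D P \<Longrightarrow> d \<in> D \<Longrightarrow> d \<in> localization D P"
  using D_sub_loc prime_one by blast
lemma V_invs: assumes "prime_ideal_in D P" "s \<in> D" "s \<notin> P" shows "1 / s \<in> localization D P"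
  using loc_mem[OF D1 assms(2,3)] .

lemma val_min:
  assumes pP: "prime_ideal_in D P" and vP: "valuation_domain_in (localization D P)"
  shows "finite F \<Longrightarrow> (\<exists>f\<in>F. f \<noteq> 0) \<Longrightarrow> \<exists>\<gamma>0\<in>F. \<gamma>0 \<noteq> 0 \<and> (\<forall>\<gamma>\<in>F. \<gamma> / \<gamma>0 \<in> localization D P)"
proof (induction F rule: finite_induct)
  case empty then show ?case by simp
next
  case (insert a F)
  let ?V = "localization D P"
  show ?case
  proof (cases "\<exists>f\<in>F. f \<noteq> 0")
    case False
    then have a0: "a \<noteq> 0" using insert by auto
    have "\<forall>\<gamma>\<in>insert a F. \<gamma> / a \<in> ?V" using False a0 V_zero[OF pP] V_one[OF pP] by auto
    then show ?thesis using a0 by blast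
  next
    case True
    then obtain g where g: "g \<in> F" "g \<noteq> 0" "\<forall>\<gamma>\<in>F. \<gamma> / g \<in> ?V" using insert by blast
    show ?thesis
    proof (cases "a / g \<in> ?V")
      case True then show ?thesis using g by auto
    next
      case False
      then have a0: "a \<noteq> 0" using V_zero[OF pP] by auto
      have ne: "a / g \<noteq> 0" using a0 g by simp
      have "a / g \<in> ?V \<or> inverse (a / g) \<in> ?V" using vP ne unfolding valuation_domain_in_def by blast
      then have "inverse (a / g) \<in> ?V" using False by blast
      then have ga: "g / a \<in> ?V" by simp
      have "\<forall>\<gamma>\<in>insert a F. \<gamma> / a \<in> ?V"
      proof
        fix \<gamma> assume "\<gamma> \<in> insert a F"
        then show "\<gamma> / a \<in> ?V"
        proof
          assume "\<gamma> = a" then show ?thesis using a0 V_one[OF pP] by simp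
        next
          assume "\<gamma> \<in> F"
          then have "(\<gamma> / g) * (g / a) \<in> ?V" using g ga V_closed[OF pP] by blast
          then show ?thesis using g by simp
        qed
      qed
      then show ?thesis using a0 by blast
    qed
  qed
qed

lemma common_denom_V: assumes pP: "prime_ideal_in D P"
  shows "finite X \<Longrightarrow> X \<subseteq> localization D P \<Longrightarrow> \<exists>s\<in>D. s \<notin> P \<and> (\<forall>v\<in>X. s * v \<in> D)"
proof (induction X rule: finite_induct)
  case empty then show ?case using D1 prime_one[OF pP] by blast
next
  case (insert v X)
  then obtain s where s: "s \<in> D" "s \<notin> P" "\<forall>u\<in>X. s * u \<in> D" by auto
  obtain a t where at: "a \<in> D" "t \<in> D" "t \<notin> P" "v = a / t" using insert loc_elim by blast
  have t0: "t \<noteq> 0" using prime_ne0[OF pP at(3)] .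
  have "s * t \<in> D" "s * t \<notin> P" using Dmult s at prime_mult_notin[OF pP] by auto
  moreover have "s * t * v = s * a" using at t0 by simp
  then have "s * t * v \<in> D" using s at Dmult by simp
  moreover have "\<forall>u\<in>X. s * t * u \<in> D"
  proof
    fix u assume "u \<in> X"
    then have "s * u \<in> D" using s by auto
    then have "t * (s * u) \<in> D" using at Dmult by simp
    then show "s * t * u \<in> D" by (simp add: mult_ac)
  qed
  ultimately show ?case by (intro bexI[of _ "s * t"]) auto
qed

end


context ctx begin

lemma gkd_val: "star_GKD D st \<Longrightarrow> max_star D st P \<Longrightarrow> valuation_domain_in (localization D P)"
  unfolding star_GKD_def star_IRKT_def by blast
lemma gkd_ht: "star_GKD D st \<Longrightarrow> max_star D st P \<Longrightarrow> height_one D P"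
  unfolding star_GKD_def by blast
lemma gkd_fin: "star_GKD D st \<Longrightarrow> x \<in> D \<Longrightarrow> x \<noteq> 0 \<Longrightarrow> finite {P. max_star D st P \<and> x \<in> P}"
  unfolding star_GKD_def star_IRKT_def by blast

lemma Vsum: assumes pP: "prime_ideal_in D P" shows "(\<And>i. i \<in> S \<Longrightarrow> f i \<in> localization D P) \<Longrightarrow> sum f S \<in> localization D P"
proof (induction S rule: infinite_finite_induct)
  case (infinite A) then show ?case by (simp add: V_zero[OF pP])
next
  case empty then show ?case by (simp add: V_zero[OF pP])
next
  case (insert x F) then show ?case using V_closed[OF pP] by simp
qed

lemma gen_all_zero: "(\<forall>f\<in>F. f = 0) \<Longrightarrow> gen D F \<subseteq> {0}"
  unfolding gen_def by (auto intro!: sum.neutral)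

lemma loc0: assumes gkd: "star_GKD D st" and mM: "max_star D st M" and fF: "finite F" and g0: "gen D F \<noteq> {0}"
  shows "\<exists>\<gamma>0\<in>F. \<exists>h. h \<in> inv_ideal D (gen D F) \<and> h * \<gamma>0 \<in> D \<and> h * \<gamma>0 \<notin> M"
proof -
  note pM = max_prime[OF mM]
  note vM = gkd_val[OF gkd mM]
  have "\<exists>f\<in>F. f \<noteq> 0"
  proof (rule ccontr)
    assume "\<not> (\<exists>f\<in>F. f \<noteq> 0)"
    then have "gen D F \<subseteq> {0}" using gen_all_zero by blast
    then show False using g0 submod_zero[OF gen_submod, of F] by blast
  qed
  then obtain \<gamma>0 where ga: "\<gamma>0 \<in> F" "\<gamma>0 \<noteq> 0" "\<forall>\<gamma>\<in>F. \<gamma> / \<gamma>0 \<in> localization D M"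
    using val_min[OF pM vM fF] by blast
  have "finite ((\<lambda>\<gamma>. \<gamma> / \<gamma>0) ` F)" "(\<lambda>\<gamma>. \<gamma> / \<gamma>0) ` F \<subseteq> localization D M" using fF ga by auto
  then obtain s where s: "s \<in> D" "s \<notin> M" "\<forall>v\<in>(\<lambda>\<gamma>. \<gamma> / \<gamma>0) ` F. s * v \<in> D"
    using common_denom_V[OF pM] by blast
  define h where "h = s / \<gamma>0"
  have hg: "\<And>\<gamma>. \<gamma> \<in> F \<Longrightarrow> h * \<gamma> \<in> D"
  proof -
    fix \<gamma> assume "\<gamma> \<in> F"
    then have "s * (\<gamma> / \<gamma>0) \<in> D" using s by auto
    moreover have "s * (\<gamma> / \<gamma>0) = h * \<gamma>" by (simp add: h_def)
    ultimately show "h * \<gamma> \<in> D" by simp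
  qed
  have "h \<in> inv_ideal D (gen D F)"
    unfolding inv_ideal_def
  proof (rule CollectI, rule ballI)
    fix z assume "z \<in> gen D F"
    then obtain c where c: "\<forall>f\<in>F. c f \<in> D" "z = (\<Sum>f\<in>F. c f * f)" by (auto simp: gen_def)
    have e: "h * z = (\<Sum>f\<in>F. c f * (h * f))" using c by (simp add: sum_distrib_left mult_ac)
    show "h * z \<in> D" unfolding e
    proof (rule Dsum)
      fix f assume "f \<in> F"
      then show "c f * (h * f) \<in> D" using c hg Dmult by blast
    qed
  qed
  moreover have "h * \<gamma>0 = s" using ga by (simp add: h_def)
  ultimately show ?thesis using ga s by auto
qed

lemma st_sub_lcl: assumes gkd: "star_GKD D st" and mM: "max_star D st M" and nzA: "nz_frac D A"
  shows "st A \<subseteq> lcl D A M"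
proof
  fix y assume "y \<in> st A"
  then obtain J where J: "fin_gen_nz D J" "J \<subseteq> A" "y \<in> st J"
    using fc nzA unfolding finite_character_def by blast
  obtain F where F: "finite F" "J = gen D F" "J \<noteq> {0}" using J unfolding fin_gen_nz_def by auto
  have nzJ: "nz_frac D J" using fin_gen_nz_nz[OF J(1)] .
  obtain \<gamma>0 h where gh: "\<gamma>0 \<in> F" "h \<in> inv_ideal D J" "h * \<gamma>0 \<in> D" "h * \<gamma>0 \<notin> M"
    using loc0[OF gkd mM F(1)] F by blast
  have h0: "h \<noteq> 0" using gh max_props(7)[OF mM] by auto
  have g0: "\<gamma>0 \<noteq> 0" using gh max_props(7)[OF mM] by auto
  have "smul_set h J \<subseteq> D" using gh(2) by (auto simp: inv_ideal_def smul_set_def)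
  then have "st (smul_set h J) \<subseteq> D" using st_int[OF smul_nz[OF nzJ h0]] by blast
  then have "smul_set h (st J) \<subseteq> D" using st_smul[OF h0 nzJ] by simp
  then have hy: "h * y \<in> D" using J(3) by (auto simp: smul_set_def)
  have "\<gamma>0 \<in> J" using gen_contains[OF F(1) gh(1)] F by simp
  then have "\<gamma>0 \<in> A" using J by auto
  then have "(h * y) * \<gamma>0 \<in> A" using submod_mult[OF nz_frac_submod[OF nzA] hy] by blast
  then have "((h * y) * \<gamma>0) / (h * \<gamma>0) \<in> lcl D A M" using lcl_mem gh by blast
  moreover have "((h * y) * \<gamma>0) / (h * \<gamma>0) = y" using h0 g0 by simp
  ultimately show "y \<in> lcl D A M" by simp
qed

lemma lcl_trans: assumes pM: "prime_ideal_in D M" shows "lcl D (lcl D A M) M \<subseteq> lcl D A M"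
proof
  fix z assume "z \<in> lcl D (lcl D A M) M"
  then obtain u s where us: "u \<in> lcl D A M" "s \<in> D" "s \<notin> M" "z = u / s" by (rule lcl_elim)
  then obtain a t where at: "a \<in> A" "t \<in> D" "t \<notin> M" "u = a / t" by (meson lcl_elim)
  have "a / (t * s) \<in> lcl D A M" using lcl_mem at us Dmult prime_mult_notin[OF pM] by simp
  moreover have "z = a / (t * s)" using us at by simp
  ultimately show "z \<in> lcl D A M" by simp
qed

lemma lcl_st: assumes gkd: "star_GKD D st" and mM: "max_star D st M" and nzA: "nz_frac D A"
  shows "lcl D (st A) M = lcl D A M"
proof
  show "lcl D (st A) M \<subseteq> lcl D A M"
    using lcl_mono[OF st_sub_lcl[OF gkd mM nzA]] lcl_trans[OF max_prime[OF mM]] by blast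
  show "lcl D A M \<subseteq> lcl D (st A) M" using lcl_mono[OF st_ext[OF nzA]] .
qed

lemma in_by_lcl: assumes sA: "star_ideal D st A" and all: "\<forall>M. max_star D st M \<longrightarrow> y \<in> lcl D A M"
  shows "y \<in> A"
proof (cases "y = 0")
  case True then show ?thesis using sA submod_zero nz_frac_submod by (auto simp: star_ideal_def)
next
  case y0: False
  have nzA: "nz_frac D A" and stA: "st A = A" using sA by (auto simp: star_ideal_def)
  have smA: "submod D A" using nz_frac_submod[OF nzA] .
  define H where "H = {d \<in> D. d * y \<in> A}"
  have smH: "submod D H" unfolding submod_def H_def
    using D0 smA submod_zero submod_add submod_mult Dadd Dmult by (auto simp: distrib_right mult.assoc)
  have HD: "H \<subseteq> D" by (auto simp: H_def)
  obtain \<alpha> where al: "\<alpha> \<in> A" "\<alpha> \<noteq> 0" using nz_frac_ex[OF nzA] by auto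
  obtain p q where pq: "p \<in> D" "q \<in> D" "q \<noteq> 0" "\<alpha> = p / q" using Dfrac by blast
  obtain a b where ab: "a \<in> D" "b \<in> D" "b \<noteq> 0" "y = a / b" using Dfrac by blast
  have p0: "p \<noteq> 0" using pq al by auto
  have e1: "(b * p) * y = p * a" using ab by simp
  have e2: "(a * q) * \<alpha> = p * a" using pq by simp
  have e: "(b * p) * y = (a * q) * \<alpha>" unfolding e1 e2 ..
  have "a * q \<in> D" using Dmult ab pq by simp
  then have "(a * q) * \<alpha> \<in> A" using submod_mult[OF smA _ al(1)] by blast
  then have "(b * p) * y \<in> A" unfolding e .
  moreover have "b * p \<in> D" using Dmult ab pq by simp
  ultimately have bpH: "b * p \<in> H" unfolding H_def by blast
  have bp0: "b * p \<noteq> 0" using ab p0 by simp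
  have "H \<noteq> {0}" using bpH bp0 by blast
  then have nzH: "nz_frac D H" using nz_frac_int[OF smH HD] by blast
  have "smul_set y H \<subseteq> A" by (auto simp: smul_set_def H_def mult.commute)
  then have "st (smul_set y H) \<subseteq> A" using st_below[OF smul_nz[OF nzH y0] sA] by blast
  then have sy: "smul_set y (st H) \<subseteq> A" using st_smul[OF y0 nzH] by simp
  have "st H \<subseteq> H"
  proof
    fix h assume h: "h \<in> st H"
    then have "h \<in> D" using st_int[OF nzH HD] by auto
    moreover have "y * h \<in> A" using sy h by (auto simp: smul_set_def)
    ultimately show "h \<in> H" by (simp add: H_def mult.commute)
  qed
  then have sH: "star_ideal D st H" using st_ext[OF nzH] nzH by (auto simp: star_ideal_def)
  have "H = D"
  proof (rule ccontr)
    assume "H \<noteq> D"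
    then obtain M where M: "max_star D st M" "H \<subseteq> M" using exists_max[OF sH HD] by blast
    then have "y \<in> lcl D A M" using all by blast
    then obtain c s where cs: "c \<in> A" "s \<in> D" "s \<notin> M" "y = c / s" by (rule lcl_elim)
    have "s \<noteq> 0" using cs max_props(7)[OF M(1)] by auto
    then have "s * y = c" using cs by simp
    then have "s \<in> H" using cs by (simp add: H_def)
    then show False using M cs by auto
  qed
  then have "1 \<in> H" using D1 by simp
  then show ?thesis by (simp add: H_def)
qed

lemma eq_by_lcl: assumes "star_ideal D st A" "star_ideal D st B"
  and "\<forall>M. max_star D st M \<longrightarrow> lcl D A M = lcl D B M" shows "A = B"
proof
  show "A \<subseteq> B"
  proof
    fix y assume "y \<in> A"
    then have "\<forall>M. max_star D st M \<longrightarrow> y \<in> lcl D A M" using lcl_self max_props(6) by blast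
    then show "y \<in> B" using in_by_lcl[OF assms(2)] assms(3) by simp
  qed
  show "B \<subseteq> A"
  proof
    fix y assume "y \<in> B"
    then have "\<forall>M. max_star D st M \<longrightarrow> y \<in> lcl D B M" using lcl_self max_props(6) by blast
    then show "y \<in> A" using in_by_lcl[OF assms(1)] assms(3) by simp
  qed
qed

end


context ctx begin

lemma arch: assumes gkd: "star_GKD D st" and mP: "max_star D st P" and xP: "x \<in> P" and x0: "x \<noteq> 0"
  and wP: "w \<in> P"
  shows "\<exists>n\<ge>1. \<exists>v\<in>localization D P. w ^ n = x * v"
proof -
  note pP = max_prime[OF mP]
  note vP = gkd_val[OF gkd mP]
  note mp = max_props[OF mP]
  let ?V = "localization D P"
  have xD: "x \<in> D" using xP mp(2) by auto
  have VD: "\<And>d. d \<in> D \<Longrightarrow> d \<in> ?V" using V_D[OF pP] .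
  have Vm: "\<And>u v. u \<in> ?V \<Longrightarrow> v \<in> ?V \<Longrightarrow> u * v \<in> ?V" using V_closed[OF pP] by blast
  define R where "R = {d \<in> D. \<exists>n\<ge>1. \<exists>v\<in>?V. d ^ n = x * v}"
  have RP: "R \<subseteq> P"
  proof
    fix d assume "d \<in> R"
    then obtain n v where d: "d \<in> D" "n \<ge> 1" "v \<in> ?V" "d ^ n = x * v" by (auto simp: R_def)
    show "d \<in> P"
    proof (rule ccontr)
      assume dP: "d \<notin> P"
      obtain a s where as: "a \<in> D" "s \<in> D" "s \<notin> P" "v = a / s" using loc_elim[OF d(3)] by blast
      have s0: "s \<noteq> 0" using prime_ne0[OF pP as(3)] .
      have "s * d ^ n = a * x" using d(4) as s0 by simp
      moreover have "a * x \<in> P" using submod_mult[OF mp(5) as(1) xP] .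
      moreover have "s * d ^ n \<notin> P"
        using prime_mult_notin[OF pP as(2) Dpow[OF d(1)] as(3) prime_pow_notin[OF pP d(1) dP]] .
      ultimately show False by simp
    qed
  qed
  have R0: "0 \<in> R" unfolding R_def using D0 V_zero[OF pP] by (intro CollectI conjI exI[of _ 1] bexI[of _ 0]) auto
  have xR: "x \<in> R" unfolding R_def using xD V_one[OF pP] by (intro CollectI conjI exI[of _ 1] bexI[of _ 1]) auto
  have Radd: "d + e \<in> R" if dR: "d \<in> R" and eR: "e \<in> R" for d e
  proof -
    obtain n v where d: "d \<in> D" "n \<ge> 1" "v \<in> ?V" "d ^ n = x * v" using dR by (auto simp: R_def)
    obtain m u where e: "e \<in> D" "m \<ge> 1" "u \<in> ?V" "e ^ m = x * u" using eR by (auto simp: R_def)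
    define N where "N = n + m"
    define t where "t = (\<lambda>k. if n \<le> k then of_nat (N choose k) * (v * d ^ (k - n)) * e ^ (N - k)
                              else of_nat (N choose k) * d ^ k * (u * e ^ (N - k - m)))"
    have tm: "of_nat (N choose k) * d ^ k * e ^ (N - k) = x * t k" for k
    proof (cases "n \<le> k")
      case True
      have "d ^ k = d ^ n * d ^ (k - n)" using True by (metis le_add_diff_inverse power_add)
      then show ?thesis using True d(4) by (simp add: t_def mult_ac)
    next
      case False
      then have "N - k = m + (N - k - m)" by (simp add: N_def)
      then have "e ^ (N - k) = e ^ m * e ^ (N - k - m)" by (metis power_add)
      then show ?thesis using False e(4) by (simp add: t_def mult_ac)
    qed
    have tV: "t k \<in> ?V" for k
      unfolding t_def using d e VD Vm Dof_nat Dpow by auto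
    have "(d + e) ^ N = (\<Sum>k\<le>N. of_nat (N choose k) * d ^ k * e ^ (N - k))" by (rule binomial_ring)
    also have "\<dots> = (\<Sum>k\<le>N. x * t k)" using tm by simp
    also have "\<dots> = x * (\<Sum>k\<le>N. t k)" by (simp add: sum_distrib_left)
    finally have "(d + e) ^ N = x * (\<Sum>k\<le>N. t k)" .
    moreover have "(\<Sum>k\<le>N. t k) \<in> ?V" by (rule Vsum[OF pP], rule tV)
    moreover have "N \<ge> 1" "d + e \<in> D" using d e Dadd by (auto simp: N_def)
    ultimately show ?thesis unfolding R_def by blast
  qed
  have Rmult: "c * d \<in> R" if cD: "c \<in> D" and dR: "d \<in> R" for c d
  proof -
    obtain n v where d: "d \<in> D" "n \<ge> 1" "v \<in> ?V" "d ^ n = x * v" using dR by (auto simp: R_def)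
    have "(c * d) ^ n = x * (c ^ n * v)" using d by (simp add: power_mult_distrib mult_ac)
    moreover have "c ^ n * v \<in> ?V" using Vm VD Dpow cD d by blast
    moreover have "c * d \<in> D" using Dmult cD d by simp
    ultimately show ?thesis unfolding R_def using d by blast
  qed
  have smR: "submod D R" unfolding submod_def using R0 Radd Rmult by blast
  have RD: "R \<subseteq> D" by (auto simp: R_def)
  have RneD: "R \<noteq> D" using RP mp(6) D1 by auto
  have Rprime: "\<forall>a\<in>D. \<forall>b\<in>D. a * b \<in> R \<longrightarrow> a \<in> R \<or> b \<in> R"
  proof (intro ballI impI)
    fix a b assume ab: "a \<in> D" "b \<in> D" "a * b \<in> R"
    obtain n v where n: "n \<ge> 1" "v \<in> ?V" "(a * b) ^ n = x * v" using ab by (auto simp: R_def)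
    show "a \<in> R \<or> b \<in> R"
    proof (cases "a = 0 \<or> b = 0")
      case True then show ?thesis using R0 by auto
    next
      case False
      then have an: "a ^ n \<noteq> 0" and bn: "b ^ n \<noteq> 0" by auto
      have q0: "a ^ n / b ^ n \<noteq> 0" using an bn by simp
      have "a ^ n / b ^ n \<in> ?V \<or> inverse (a ^ n / b ^ n) \<in> ?V"
        using vP q0 unfolding valuation_domain_in_def by blast
      then show ?thesis
      proof
        assume q: "a ^ n / b ^ n \<in> ?V"
        have "a ^ (n + n) = (a * b) ^ n * (a ^ n / b ^ n)" using bn by (simp add: power_add power_mult_distrib)
        then have "a ^ (n + n) = x * (v * (a ^ n / b ^ n))" using n by (simp add: mult_ac)
        moreover have "v * (a ^ n / b ^ n) \<in> ?V" using Vm n q by blast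
        moreover have "n + n \<ge> 1" using n by simp
        ultimately have "a \<in> R" unfolding R_def using ab by blast
        then show ?thesis by simp
      next
        assume q: "inverse (a ^ n / b ^ n) \<in> ?V"
        then have q': "b ^ n / a ^ n \<in> ?V" by simp
        have "b ^ (n + n) = (a * b) ^ n * (b ^ n / a ^ n)" using an by (simp add: power_add power_mult_distrib)
        then have "b ^ (n + n) = x * (v * (b ^ n / a ^ n))" using n by (simp add: mult_ac)
        moreover have "v * (b ^ n / a ^ n) \<in> ?V" using Vm n q' by blast
        moreover have "n + n \<ge> 1" using n by simp
        ultimately have "b \<in> R" unfolding R_def using ab by blast
        then show ?thesis by simp
      qed
    qed
  qed
  have pR: "prime_ideal_in D R" unfolding prime_ideal_in_def using smR RD RneD Rprime by blast
  have "R \<noteq> {0}" using xR x0 by auto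
  then have "R = P" using gkd_ht[OF gkd mP] pR RP unfolding height_one_def by blast
  then have "w \<in> R" using wP by simp
  then show ?thesis by (auto simp: R_def)
qed

end


definition Ixd :: "'a::field set \<Rightarrow> 'a \<Rightarrow> 'a set \<Rightarrow> 'a set" where
  "Ixd D x P = principal_frac (localization D P) x \<inter> D"

context ctx begin

lemma lcl_unit: assumes "submod D J" "u \<in> J" "u \<in> D" "u \<notin> M" "prime_ideal_in D M" "y \<in> D"
  shows "y \<in> lcl D J M"
proof -
  have u0: "u \<noteq> 0" using prime_ne0 assms by blast
  have "y * u \<in> J" using submod_mult assms by blast
  then have "(y * u) / u \<in> lcl D J M" using lcl_mem assms by blast
  then show ?thesis using u0 by simp
qed

lemma lcl_good: assumes sA: "submod D A" and AD: "A \<subseteq> D" and u: "u \<in> A" "u \<notin> M" and pM: "prime_ideal_in D M"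
  shows "lcl D A M = localization D M"
proof
  show "lcl D A M \<subseteq> localization D M" using lcl_mono[OF AD] lcl_D by blast
  show "localization D M \<subseteq> lcl D A M"
  proof
    fix z assume "z \<in> localization D M"
    then obtain d s where ds: "d \<in> D" "s \<in> D" "s \<notin> M" "z = d / s" by (rule loc_elim)
    have uD: "u \<in> D" using u AD by auto
    have u0: "u \<noteq> 0" using prime_ne0[OF pM u(2)] .
    have "d * u \<in> A" using submod_mult[OF sA ds(1) u(1)] .
    moreover have "s * u \<in> D" "s * u \<notin> M" using Dmult ds uD prime_mult_notin[OF pM] u by auto
    ultimately have "(d * u) / (s * u) \<in> lcl D A M" using lcl_mem by blast
    then show "z \<in> lcl D A M" using ds u0 by simp
  qed
qed

lemma lcl_mult_left: assumes sB: "submod D B" and AD: "A \<subseteq> D" and u: "u \<in> A" "u \<notin> M" and pM: "prime_ideal_in D M"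
  shows "lcl D (ideal_mult A B) M = lcl D B M"
proof
  show "lcl D (ideal_mult A B) M \<subseteq> lcl D B M" using lcl_mono[OF mult_subr[OF sB AD]] .
  show "lcl D B M \<subseteq> lcl D (ideal_mult A B) M"
  proof
    fix z assume "z \<in> lcl D B M"
    then obtain b s where bs: "b \<in> B" "s \<in> D" "s \<notin> M" "z = b / s" by (rule lcl_elim)
    have uD: "u \<in> D" using u AD by auto
    have u0: "u \<noteq> 0" using prime_ne0[OF pM u(2)] .
    have "u * b \<in> ideal_mult A B" using mult_in[OF u(1) bs(1)] .
    moreover have "u * s \<in> D" "u * s \<notin> M" using Dmult bs uD prime_mult_notin[OF pM] u by auto
    ultimately have "(u * b) / (u * s) \<in> lcl D (ideal_mult A B) M" using lcl_mem by blast
    then show "z \<in> lcl D (ideal_mult A B) M" using bs u0 by simp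
  qed
qed

lemma lcl_mult_right: assumes sA: "submod D A" and BD: "B \<subseteq> D" and v: "v \<in> B" "v \<notin> M" and pM: "prime_ideal_in D M"
  shows "lcl D (ideal_mult A B) M = lcl D A M"
proof
  show "lcl D (ideal_mult A B) M \<subseteq> lcl D A M" using lcl_mono[OF mult_subl[OF sA BD]] .
  show "lcl D A M \<subseteq> lcl D (ideal_mult A B) M"
  proof
    fix z assume "z \<in> lcl D A M"
    then obtain a s where as: "a \<in> A" "s \<in> D" "s \<notin> M" "z = a / s" by (rule lcl_elim)
    have vD: "v \<in> D" using v BD by auto
    have v0: "v \<noteq> 0" using prime_ne0[OF pM v(2)] .
    have "a * v \<in> ideal_mult A B" using mult_in[OF as(1) v(1)] .
    moreover have "s * v \<in> D" "s * v \<notin> M" using Dmult as vD prime_mult_notin[OF pM] v by auto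
    ultimately have "(a * v) / (s * v) \<in> lcl D (ideal_mult A B) M" using lcl_mem by blast
    then show "z \<in> lcl D (ideal_mult A B) M" using as v0 by simp
  qed
qed

lemma prod_good: assumes pM: "prime_ideal_in D M"
  shows "(\<forall>I\<in>set Is. I \<subseteq> D \<and> submod D I \<and> (\<exists>u\<in>I. u \<notin> M)) \<Longrightarrow> \<exists>u\<in>ideal_prod D Is. u \<notin> M"
proof (induction Is)
  case Nil then show ?case using D1 prime_one[OF pM] by auto
next
  case (Cons I Is)
  then obtain u where u: "u \<in> I" "u \<notin> M" by auto
  obtain v where v: "v \<in> ideal_prod D Is" "v \<notin> M" using Cons by auto
  have "ideal_prod D Is \<subseteq> D" using prod_int Cons by auto
  then have "u * v \<notin> M" using prime_mult_notin[OF pM] u v Cons by auto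
  then show ?case using mult_in[OF u(1) v(1)] by auto
qed

lemma ft_inv: assumes gkd: "star_GKD D st" and ft: "finite_type D st J" shows "star_invertible D st J"
proof -
  obtain J0 where J0: "fin_gen_nz D J0" "J = st J0" using ft unfolding finite_type_def by blast
  obtain F where F: "finite F" "J0 = gen D F" "J0 \<noteq> {0}" using J0 unfolding fin_gen_nz_def by auto
  have nz0: "nz_frac D J0" using fin_gen_nz_nz[OF J0(1)] .
  have nzJ: "nz_frac D J" using st_nz[OF nz0] J0 by simp
  have invJ: "inv_ideal D J = inv_ideal D J0" using inv_st[OF nz0] J0 by simp
  define X where "X = ideal_mult J (inv_ideal D J)"
  have nzX: "nz_frac D X" unfolding X_def using mult_nz[OF nzJ inv_nz[OF nzJ]] .
  have XD: "X \<subseteq> D" unfolding X_def using mult_inv_int .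
  have stXD: "st X \<subseteq> D" using st_int[OF nzX XD] .
  have "st X = D"
  proof (rule ccontr)
    assume "st X \<noteq> D"
    then obtain M where M: "max_star D st M" "st X \<subseteq> M" using exists_max[OF st_star_ideal[OF nzX] stXD] by blast
    obtain \<gamma>0 h where gh: "\<gamma>0 \<in> F" "h \<in> inv_ideal D J0" "h * \<gamma>0 \<in> D" "h * \<gamma>0 \<notin> M"
      using loc0[OF gkd M(1) F(1)] F by blast
    have "\<gamma>0 \<in> J" using gen_contains[OF F(1) gh(1)] F J0 st_ext[OF nz0] by blast
    then have "\<gamma>0 * h \<in> X" unfolding X_def using mult_in gh(2) invJ by blast
    then have "\<gamma>0 * h \<in> M" using st_ext[OF nzX] M by blast
    then show False using gh by (simp add: mult.commute)
  qed
  then show ?thesis unfolding star_invertible_def X_def .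
qed

end

locale gctx = ctx +
  fixes x :: "'a::field"
  assumes gkd: "star_GKD D st" and xD: "x \<in> D" and x0: "x \<noteq> 0"
begin

abbreviation "Ix \<equiv> Ixd D x"

lemma Ix_iff: "u \<in> Ix P \<longleftrightarrow> u \<in> D \<and> (\<exists>v\<in>localization D P. u = x * v)"
  unfolding Ixd_def principal_frac_def by auto

lemma Ix_sub: "Ix P \<subseteq> D" using Ix_iff by blast

lemma Ix_submod: assumes pP: "prime_ideal_in D P" shows "submod D (Ix P)"
  unfolding submod_def
proof (intro conjI ballI)
  show "0 \<in> Ix P" unfolding Ix_iff using D0 V_zero[OF pP] by (intro conjI bexI[of _ 0]) auto
next
  fix a b assume "a \<in> Ix P" "b \<in> Ix P"
  then obtain v w where "a \<in> D" "b \<in> D" "v \<in> localization D P" "w \<in> localization D P" "a = x * v" "b = x * w"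
    unfolding Ix_iff by blast
  moreover have "a + b = x * (v + w)" using calculation by (simp add: algebra_simps)
  moreover have "v + w \<in> localization D P" using V_closed[OF pP] calculation by blast
  ultimately show "a + b \<in> Ix P" unfolding Ix_iff using Dadd by blast
next
  fix d a assume "d \<in> D" "a \<in> Ix P"
  then obtain v where "a \<in> D" "v \<in> localization D P" "a = x * v" unfolding Ix_iff by blast
  moreover have "d * a = x * (d * v)" using calculation by (simp add: mult_ac)
  moreover have "d * v \<in> localization D P" using V_closed[OF pP] V_D[OF pP \<open>d \<in> D\<close>] calculation by blast
  ultimately show "d * a \<in> Ix P" unfolding Ix_iff using Dmult \<open>d \<in> D\<close> by blast
qed

lemma x_Ix: "prime_ideal_in D P \<Longrightarrow> x \<in> Ix P"
  unfolding Ix_iff using xD V_one by (metis mult_1_right)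

lemma Ix_nz: assumes "prime_ideal_in D P" shows "nz_frac D (Ix P)"
proof -
  have "Ix P \<noteq> {0}" using x_Ix[OF assms] x0 by auto
  then show ?thesis using nz_frac_int[OF Ix_submod[OF assms] Ix_sub] by blast
qed

lemma Ix_one: assumes mP: "max_star D st P" and xP: "x \<in> P" shows "1 \<notin> Ix P"
proof
  assume "1 \<in> Ix P"
  then obtain v where v: "v \<in> localization D P" "1 = x * v" unfolding Ix_iff by blast
  then obtain a s where as: "a \<in> D" "s \<in> D" "s \<notin> P" "v = a / s" by (meson loc_elim)
  have s0: "s \<noteq> 0" using prime_ne0[OF max_prime[OF mP] as(3)] .
  have "s = a * x" using v as s0 by (simp add: field_simps)
  moreover have "a * x \<in> P" using submod_mult[OF max_props(5)[OF mP] as(1) xP] .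
  ultimately show False using as by simp
qed

lemma Ix_good: assumes mP: "max_star D st P" and xP: "x \<in> P" and mM: "max_star D st M" and MP: "M \<noteq> P"
  shows "\<exists>u\<in>Ix P. u \<notin> M"
proof (cases "x \<in> M")
  case False then show ?thesis using x_Ix[OF max_prime[OF mP]] by blast
next
  case True
  have "\<not> P \<subseteq> M"
  proof
    assume "P \<subseteq> M"
    then have "M = P" using max_maximal[OF mP] max_props[OF mM] by blast
    then show False using MP by simp
  qed
  then obtain w where w: "w \<in> P" "w \<notin> M" by auto
  obtain n v where nv: "n \<ge> 1" "v \<in> localization D P" "w ^ n = x * v" using arch[OF gkd mP xP x0 w(1)] by blast
  have wD: "w \<in> D" using w max_props(2)[OF mP] by auto
  have "w ^ n \<in> Ix P" unfolding Ix_iff using Dpow[OF wD] nv by blast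
  moreover have "w ^ n \<notin> M" using prime_pow_notin[OF max_prime[OF mM] wD w(2)] .
  ultimately show ?thesis by blast
qed

lemma Ix_max_only: assumes "max_star D st P" "x \<in> P" "max_star D st M" "Ix P \<subseteq> M" shows "M = P"
  using Ix_good[OF assms(1,2,3)] assms(4) by blast

lemma lcl_Ix: assumes mP: "max_star D st P" shows "lcl D (Ix P) P = principal_frac (localization D P) x"
proof
  note pP = max_prime[OF mP]
  show "lcl D (Ix P) P \<subseteq> principal_frac (localization D P) x"
  proof
    fix z assume "z \<in> lcl D (Ix P) P"
    then obtain u s where us: "u \<in> Ix P" "s \<in> D" "s \<notin> P" "z = u / s" by (rule lcl_elim)
    then obtain v where v: "v \<in> localization D P" "u = x * v" unfolding Ix_iff by blast
    have "1 / s \<in> localization D P" using V_invs[OF pP us(2,3)] .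
    then have w: "v * (1 / s) \<in> localization D P" using V_closed[OF pP] v by blast
    have e: "z = x * (v * (1 / s))" using us v by simp
    show "z \<in> principal_frac (localization D P) x" unfolding principal_frac_def by (rule image_eqI[where f="\<lambda>d. x * d", OF e w])
  qed
  show "principal_frac (localization D P) x \<subseteq> lcl D (Ix P) P"
  proof
    fix z assume "z \<in> principal_frac (localization D P) x"
    then obtain v where v: "v \<in> localization D P" "z = x * v" by (auto simp: principal_frac_def)
    then obtain a s where as: "a \<in> D" "s \<in> D" "s \<notin> P" "v = a / s" by (meson loc_elim)
    have "x * a \<in> Ix P" unfolding Ix_iff using Dmult xD as V_D[OF pP as(1)] by blast
    then have "(x * a) / s \<in> lcl D (Ix P) P" using lcl_mem as by blast
    then show "z \<in> lcl D (Ix P) P" using v as by simp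
  qed
qed

lemma Ix_star: assumes mP: "max_star D st P" shows "star_ideal D st (Ix P)"
proof -
  note pP = max_prime[OF mP]
  have nz: "nz_frac D (Ix P)" using Ix_nz[OF pP] .
  have "st (Ix P) \<subseteq> Ix P"
  proof
    fix h assume h: "h \<in> st (Ix P)"
    then have "h \<in> D" using st_int[OF nz Ix_sub] by blast
    moreover have "h \<in> principal_frac (localization D P) x"
      using st_sub_lcl[OF gkd mP nz] lcl_Ix[OF mP] h by blast
    ultimately show "h \<in> Ix P" unfolding Ixd_def by blast
  qed
  then show ?thesis using st_ext[OF nz] nz by (auto simp: star_ideal_def)
qed

end


context gctx begin

lemma Ix_ft: assumes mP: "max_star D st P" and xP: "x \<in> P" shows "finite_type D st (Ix P)"
proof -
  note pP = max_prime[OF mP]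
  define S where "S = {M. max_star D st M \<and> x \<in> M}"
  have finS: "finite S" unfolding S_def using gkd_fin[OF gkd xD x0] .
  define g where "g = (\<lambda>M. SOME u. u \<in> Ix P \<and> u \<notin> M)"
  have gM: "g M \<in> Ix P \<and> g M \<notin> M" if "M \<in> S - {P}" for M
  proof -
    have "\<exists>u. u \<in> Ix P \<and> u \<notin> M" using Ix_good[OF mP xP] that by (auto simp: S_def)
    then show ?thesis unfolding g_def by (rule someI_ex)
  qed
  define G where "G = insert x (g ` (S - {P}))"
  have finG: "finite G" using finS by (simp add: G_def)
  have GI: "G \<subseteq> Ix P" using gM x_Ix[OF pP] by (auto simp: G_def)
  define J where "J = gen D G"
  have xJ: "x \<in> J" unfolding J_def using gen_contains[OF finG] by (simp add: G_def)
  have J0: "J \<noteq> {0}" using xJ x0 by auto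
  have nzJ: "nz_frac D J" unfolding J_def using gen_nz[OF finG] J0 by (simp add: J_def)
  have smJ: "submod D J" using nzJ nz_frac_submod by blast
  have JI: "J \<subseteq> Ix P" unfolding J_def using gen_least[OF Ix_submod[OF pP] GI] .
  have sub1: "st J \<subseteq> Ix P" using st_below[OF nzJ Ix_star[OF mP] JI] .
  have sub2: "Ix P \<subseteq> st J"
  proof
    fix y assume yI: "y \<in> Ix P"
    have yD: "y \<in> D" using yI Ix_sub by blast
    have "\<forall>M. max_star D st M \<longrightarrow> y \<in> lcl D J M"
    proof (intro allI impI)
      fix M assume mM: "max_star D st M"
      note pM = max_prime[OF mM]
      show "y \<in> lcl D J M"
      proof (cases "M = P")
        case True
        obtain v where v: "v \<in> localization D P" "y = x * v" using yI unfolding Ix_iff by blast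
        then obtain a s where as: "a \<in> D" "s \<in> D" "s \<notin> P" "v = a / s" by (meson loc_elim)
        have "a * x \<in> J" using submod_mult[OF smJ as(1) xJ] .
        then have "(a * x) / s \<in> lcl D J P" using lcl_mem as by blast
        moreover have "(a * x) / s = y" using v as by simp
        ultimately show ?thesis using True by simp
      next
        case False
        show ?thesis
        proof (cases "x \<in> M")
          case True
          then have MS: "M \<in> S - {P}" using mM False by (auto simp: S_def)
          then have "g M \<in> J" unfolding J_def using gen_contains[OF finG] by (auto simp: G_def)
          moreover have "g M \<in> D" "g M \<notin> M" using gM[OF MS] Ix_sub by auto
          ultimately show ?thesis using lcl_unit[OF smJ _ _ _ pM yD] by blast
        next
          case False
          show ?thesis using lcl_unit[OF smJ xJ xD False pM yD] .
        qed
      qed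
    qed
    then have "\<forall>M. max_star D st M \<longrightarrow> y \<in> lcl D (st J) M"
      using lcl_mono[OF st_ext[OF nzJ]] by blast
    then show "y \<in> st J" using in_by_lcl[OF st_star_ideal[OF nzJ]] by blast
  qed
  have "fin_gen_nz D J" unfolding fin_gen_nz_def J_def using finG J0 by (auto simp: J_def)
  then show ?thesis unfolding finite_type_def using Ix_star[OF mP] sub1 sub2 by blast
qed

lemma Ix_homog: assumes mP: "max_star D st P" and xP: "x \<in> P" shows "star_homog D st (Ix P)"
proof -
  note mp = max_props[OF mP]
  have inP: "A \<subseteq> P" if ft: "finite_type D st A" and AD: "A \<subseteq> D" "A \<noteq> D" and IA: "Ix P \<subseteq> A" for A
  proof -
    have "star_ideal D st A" using ft by (simp add: finite_type_def)
    then obtain M where M: "max_star D st M" "A \<subseteq> M" using exists_max AD by blast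
    then have "M = P" using Ix_max_only[OF mP xP M(1)] IA by blast
    then show ?thesis using M by simp
  qed
  have "\<forall>A B. finite_type D st A \<and> A \<subseteq> D \<and> A \<noteq> D \<and> Ix P \<subseteq> A \<and>
            finite_type D st B \<and> B \<subseteq> D \<and> B \<noteq> D \<and> Ix P \<subseteq> B
            \<longrightarrow> st (ideal_add A B) \<noteq> D"
  proof (intro allI impI)
    fix A B assume h: "finite_type D st A \<and> A \<subseteq> D \<and> A \<noteq> D \<and> Ix P \<subseteq> A \<and>
            finite_type D st B \<and> B \<subseteq> D \<and> B \<noteq> D \<and> Ix P \<subseteq> B"
    have AP: "A \<subseteq> P" and BP: "B \<subseteq> P" using inP h by auto
    have nzA: "nz_frac D A" and nzB: "nz_frac D B" using h by (auto simp: finite_type_def star_ideal_def)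
    have "ideal_add A B \<subseteq> P" using add_least[OF mp(5) AP BP] .
    then have "st (ideal_add A B) \<subseteq> P" using st_below[OF add_nz[OF nzA nzB] mp(1)] by blast
    then show "st (ideal_add A B) \<noteq> D" using mp(6) D1 by auto
  qed
  moreover have "Ix P \<noteq> D" using Ix_one[OF mP xP] D1 by auto
  ultimately show ?thesis unfolding star_homog_def using Ix_sub Ix_ft[OF mP xP] by blast
qed

lemma Ix_sh1: assumes mP: "max_star D st P" and xP: "x \<in> P" shows "star_super_homog_type1 D st (Ix P)"
proof -
  note pP = max_prime[OF mP]
  have h: "star_homog D st (Ix P)" using Ix_homog[OF mP xP] .
  have MI: "M_of D st (Ix P) = P" using M_of_eq[OF h mP] x_Ix[OF pP] Ix_iff
    using Ix_max_only[OF mP xP] mP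
  proof -
    have "Ix P \<subseteq> P"
    proof
      fix u assume "u \<in> Ix P"
      then obtain v where v: "u \<in> D" "v \<in> localization D P" "u = x * v" unfolding Ix_iff by blast
      show "u \<in> P"
      proof (rule ccontr)
        assume uP: "u \<notin> P"
        obtain a s where as: "a \<in> D" "s \<in> D" "s \<notin> P" "v = a / s" using v(2) by (meson loc_elim)
        have s0: "s \<noteq> 0" using prime_ne0[OF pP as(3)] .
        have "s * u = a * x" using v as s0 by simp
        moreover have "a * x \<in> P" using submod_mult[OF max_props(5)[OF mP] as(1) xP] .
        moreover have "s * u \<notin> P" using prime_mult_notin[OF pP as(2) v(1) as(3) uP] .
        ultimately show False by simp
      qed
    qed
    then show ?thesis using M_of_eq[OF h mP] by blast
  qed
  have sup: "star_super_homog D st (Ix P)" unfolding star_super_homog_def using h ft_inv[OF gkd] by blast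
  have "\<forall>y \<in> M_of D st (Ix P) - {0}. \<exists>n\<ge>1.
        principal_frac (localization D (M_of D st (Ix P))) (y ^ n) \<inter> D \<subseteq> Ix P"
  proof
    fix y assume "y \<in> M_of D st (Ix P) - {0}"
    then have yP: "y \<in> P" using MI by simp
    obtain n v where nv: "n \<ge> 1" "v \<in> localization D P" "y ^ n = x * v" using arch[OF gkd mP xP x0 yP] by blast
    have pr: "principal_frac (localization D P) (y ^ n) \<inter> D \<subseteq> Ix P"
    proof
      fix z assume z: "z \<in> principal_frac (localization D P) (y ^ n) \<inter> D"
      then obtain u where u: "u \<in> localization D P" "z = y ^ n * u" by (auto simp: principal_frac_def)
      have "z = x * (v * u)" using u nv by (simp add: mult_ac)
      moreover have "v * u \<in> localization D P" using V_closed[OF pP nv(2) u(1)] by blast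
      ultimately show "z \<in> Ix P" unfolding Ix_iff using z by blast
    qed
    then show "\<exists>n\<ge>1. principal_frac (localization D (M_of D st (Ix P))) (y ^ n) \<inter> D \<subseteq> Ix P"
      unfolding MI using nv(1) pr by blast
  qed
  then show ?thesis unfolding star_super_homog_type1_def star_homog_type1_def using sup h by blast
qed

end


context gctx begin

lemma princ_props: "submod D (principal_frac D x)" "principal_frac D x \<subseteq> D" "x \<in> principal_frac D x"
proof -
  show "submod D (principal_frac D x)" using nz_frac_submod[OF principal_nz[OF x0]] .
  show "principal_frac D x \<subseteq> D" using xD Dmult by (auto simp: principal_frac_def)
  have "x * 1 \<in> principal_frac D x" using D1 by (auto simp: principal_frac_def)
  then show "x \<in> principal_frac D x" by simp
qed

lemma lcl_princ: assumes mM: "max_star D st M" shows "lcl D (principal_frac D x) M = principal_frac (localization D M) x"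
proof
  note pM = max_prime[OF mM]
  show "lcl D (principal_frac D x) M \<subseteq> principal_frac (localization D M) x"
  proof
    fix z assume "z \<in> lcl D (principal_frac D x) M"
    then obtain u s where us: "u \<in> principal_frac D x" "s \<in> D" "s \<notin> M" "z = u / s" by (rule lcl_elim)
    then obtain d where d: "d \<in> D" "u = x * d" by (auto simp: principal_frac_def)
    have w: "d / s \<in> localization D M" using loc_mem[OF d(1) us(2,3)] .
    have e: "z = x * (d / s)" using us d by simp
    show "z \<in> principal_frac (localization D M) x" unfolding principal_frac_def
      by (rule image_eqI[where f="\<lambda>d. x * d", OF e w])
  qed
  show "principal_frac (localization D M) x \<subseteq> lcl D (principal_frac D x) M"
  proof
    fix z assume "z \<in> principal_frac (localization D M) x"
    then obtain v where v: "v \<in> localization D M" "z = x * v" by (auto simp: principal_frac_def)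
    then obtain a s where as: "a \<in> D" "s \<in> D" "s \<notin> M" "v = a / s" by (meson loc_elim)
    have "x * a \<in> principal_frac D x" using as by (auto simp: principal_frac_def)
    then have "(x * a) / s \<in> lcl D (principal_frac D x) M" using lcl_mem as by blast
    then show "z \<in> lcl D (principal_frac D x) M" using v as by simp
  qed
qed

lemma Ix_list_props: "(\<forall>P\<in>set Ps. max_star D st P) \<Longrightarrow> \<forall>I\<in>set (map Ix Ps). I \<subseteq> D \<and> submod D I"
  using Ix_sub Ix_submod max_prime by auto

lemma prod_lcl_in:
  "distinct Ps \<Longrightarrow> set Ps \<subseteq> {P. max_star D st P \<and> x \<in> P} \<Longrightarrow> M \<in> set Ps \<Longrightarrow> max_star D st M \<Longrightarrow>
   lcl D (ideal_prod D (map Ix Ps)) M = lcl D (Ix M) M"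
proof (induction Ps)
  case Nil then show ?case by simp
next
  case (Cons P Ps)
  note pM = max_prime[OF Cons.prems(4)]
  have mP: "max_star D st P" "x \<in> P" using Cons.prems by auto
  have rest: "\<forall>Q\<in>set Ps. max_star D st Q \<and> x \<in> Q" using Cons.prems by auto
  have rprops: "\<forall>I\<in>set (map Ix Ps). I \<subseteq> D \<and> submod D I" using Ix_list_props rest by blast
  have rD: "ideal_prod D (map Ix Ps) \<subseteq> D" using prod_int[OF rprops] .
  have rsm: "submod D (ideal_prod D (map Ix Ps))" using prod_submod rprops by blast
  show ?case
  proof (cases "P = M")
    case True
    then have MPs: "M \<notin> set Ps" using Cons.prems by auto
    have "\<forall>I\<in>set (map Ix Ps). I \<subseteq> D \<and> submod D I \<and> (\<exists>u\<in>I. u \<notin> M)"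
    proof
      fix I assume I: "I \<in> set (map Ix Ps)"
      then obtain Q where Q: "Q \<in> set Ps" "I = Ix Q" by auto
      have "Q \<noteq> M" using Q MPs by auto
      then have "\<exists>u\<in>I. u \<notin> M" using Ix_good[of Q M] rest Q Cons.prems(4) by auto
      then show "I \<subseteq> D \<and> submod D I \<and> (\<exists>u\<in>I. u \<notin> M)" using rprops I by blast
    qed
    then obtain v where v: "v \<in> ideal_prod D (map Ix Ps)" "v \<notin> M" using prod_good[OF pM] by blast
    have "lcl D (ideal_mult (Ix M) (ideal_prod D (map Ix Ps))) M = lcl D (Ix M) M"
      using lcl_mult_right[OF Ix_submod[OF pM] rD v pM] .
    then show ?thesis using True by simp
  next
    case False
    obtain u where u: "u \<in> Ix P" "u \<notin> M" using Ix_good[OF mP Cons.prems(4)] False by auto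
    have "lcl D (ideal_mult (Ix P) (ideal_prod D (map Ix Ps))) M = lcl D (ideal_prod D (map Ix Ps)) M"
      using lcl_mult_left[OF rsm Ix_sub u pM] .
    moreover have "M \<in> set Ps" using Cons.prems False by auto
    ultimately show ?thesis using Cons by simp
  qed
qed

lemma two_to_one_x:
  "\<exists>Is. (\<forall>I\<in>set Is. star_super_homog_type1 D st I) \<and> principal_frac D x = st (ideal_prod D Is)"
proof -
  define S where "S = {P. max_star D st P \<and> x \<in> P}"
  have finS: "finite S" unfolding S_def using gkd_fin[OF gkd xD x0] .
  obtain Ps where Ps: "distinct Ps" "set Ps = S" using finite_distinct_list[OF finS] by blast
  define Is where "Is = map Ix Ps"
  have PsS: "\<forall>P\<in>set Ps. max_star D st P \<and> x \<in> P" using Ps by (simp add: S_def)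
  have sh: "\<forall>I\<in>set Is. star_super_homog_type1 D st I" using PsS Ix_sh1 by (auto simp: Is_def)
  have "\<forall>I\<in>set Is. nz_frac D I" using PsS Ix_nz max_prime by (auto simp: Is_def)
  then have nzp: "nz_frac D (ideal_prod D Is)" by (rule prod_nz)
  have props: "\<forall>I\<in>set Is. I \<subseteq> D \<and> submod D I" using Ix_list_props[of Ps] PsS unfolding Is_def by blast
  have pD: "ideal_prod D Is \<subseteq> D" using prod_int[OF props] .
  have psm: "submod D (ideal_prod D Is)" using prod_submod props by blast
  have "\<forall>M. max_star D st M \<longrightarrow> lcl D (principal_frac D x) M = lcl D (st (ideal_prod D Is)) M"
  proof (intro allI impI)
    fix M assume mM: "max_star D st M"
    note pM = max_prime[OF mM]
    have e1: "lcl D (st (ideal_prod D Is)) M = lcl D (ideal_prod D Is) M" using lcl_st[OF gkd mM nzp] .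
    show "lcl D (principal_frac D x) M = lcl D (st (ideal_prod D Is)) M"
    proof (cases "x \<in> M")
      case True
      then have "M \<in> set Ps" using Ps mM by (simp add: S_def)
      then have "lcl D (ideal_prod D Is) M = lcl D (Ix M) M"
        unfolding Is_def using prod_lcl_in[OF Ps(1)] Ps(2) mM by (simp add: S_def)
      also have "\<dots> = principal_frac (localization D M) x" using lcl_Ix[OF mM] .
      also have "\<dots> = lcl D (principal_frac D x) M" using lcl_princ[OF mM] by simp
      finally show ?thesis using e1 by simp
    next
      case False
      have "\<forall>I\<in>set Is. I \<subseteq> D \<and> submod D I \<and> (\<exists>u\<in>I. u \<notin> M)"
        using props PsS x_Ix max_prime False by (auto simp: Is_def)
      then obtain u where u: "u \<in> ideal_prod D Is" "u \<notin> M" using prod_good[OF pM] by blast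
      have "lcl D (ideal_prod D Is) M = localization D M" using lcl_good[OF psm pD u pM] .
      moreover have "lcl D (principal_frac D x) M = localization D M"
        using lcl_good[OF princ_props(1,2,3) False pM] .
      ultimately show ?thesis using e1 by simp
    qed
  qed
  then have "principal_frac D x = st (ideal_prod D Is)"
    using eq_by_lcl[OF principal_star[OF x0] st_star_ideal[OF nzp]] by blast
  then show ?thesis using sh by blast
qed

end

context ctx begin

lemma main_equiv:
  "(\<forall>x\<in>D. x \<noteq> 0 \<and> inverse x \<notin> D \<longrightarrow>
            (\<exists>Is. (\<forall>I\<in>set Is. star_super_homog_type1 D st I) \<and>
                  principal_frac D x = st (ideal_prod D Is)))
         \<longleftrightarrow> star_GKD D st"
proof
  assume "\<forall>x\<in>D. x \<noteq> 0 \<and> inverse x \<notin> D \<longrightarrow>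
            (\<exists>Is. (\<forall>I\<in>set Is. star_super_homog_type1 D st I) \<and>
                  principal_frac D x = st (ideal_prod D Is))"
  then show "star_GKD D st" by (rule one_to_two)
next
  assume gkd: "star_GKD D st"
  show "\<forall>x\<in>D. x \<noteq> 0 \<and> inverse x \<notin> D \<longrightarrow>
            (\<exists>Is. (\<forall>I\<in>set Is. star_super_homog_type1 D st I) \<and>
                  principal_frac D x = st (ideal_prod D Is))"
  proof (intro ballI impI)
    fix x assume "x \<in> D" "x \<noteq> 0 \<and> inverse x \<notin> D"
    then interpret g: gctx D st x using gkd by unfold_locales auto
    show "\<exists>Is. (\<forall>I\<in>set Is. star_super_homog_type1 D st I) \<and> principal_frac D x = st (ideal_prod D Is)"
      by (rule g.two_to_one_x)
  qed
qed

end

theorem propositionQ5: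
  fixes D :: "'a::field set" and st :: "'a set \<Rightarrow> 'a set"
  assumes "is_domain_in D"
    and "star_op D st"
    and "finite_character D st"
  shows "(\<forall>x\<in>D. x \<noteq> 0 \<and> inverse x \<notin> D \<longrightarrow>
            (\<exists>Is. (\<forall>I\<in>set Is. star_super_homog_type1 D st I) \<and>
                  principal_frac D x = st (ideal_prod D Is)))
         \<longleftrightarrow> star_GKD D st"
proof -
  interpret ctx D st using assms by unfold_locales
  show ?thesis by (rule main_equiv)
qed


end
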